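(* Assume the setting described in the context, let $\xi\in\mathbb{R}$, let $V\colon\mathbb{R}^{\mathfrak{d}}\to\mathbb{R}$ satisfy $V(\theta)=\|\theta\|^2+|\mathfrak{c}^\theta-2\xi|^2$ for all $\theta\in\mathbb{R}^{\mathfrak{d}}$, and let $\Theta\in C([0,\infty),\mathbb{R}^{\mathfrak{d}})$ satisfy $\Theta_t=\Theta_0-\int_0^t\mathcal{G}(\Theta_s)\,\mathrm{d}s$ for all $t\in[0,\infty)$. Then for all $t\in[0,\infty)$, $$V(\Theta_t)=V(\Theta_0)-8\int_0^t\mathcal{L}(\Theta_s)\,\mathrm{d}s-8\int_0^t\Big[\int_{[\mathscr{a},\mathscr{b}]^d}(f(x)-\xi)(\mathscr{N}^{\Theta_s}(x)-f(x))\,\mu(\mathrm{d}x)\Big]\mathrm{d}s\le V(\Theta_0)+4\int_0^t\Big[\int_{[\mathscr{a},\mathscr{b}]^d}(f(x)-\xi)^2\,\mu(\mathrm{d}x)-\mathcal{L}(\Theta_s)\Big]\mathrm{d}s.$$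
   Context: Setting: $d,H,\mathfrak{d}\in\mathbb{N}$ with $\mathfrak{d}=dH+2H+1$, $\mathscr{a}\in\mathbb{R}$, $\mathscr{b}\in(\mathscr{a},\infty)$, $f\in C([\mathscr{a},\mathscr{b}]^d,\mathbb{R})$. For $\theta=(\theta_1,\dots,\theta_{\mathfrak{d}})\in\mathbb{R}^{\mathfrak{d}}$, $i\in\{1,\dots,H\}$, $j\in\{1,\dots,d\}$ put $\mathfrak{w}^\theta_{i,j}=\theta_{(i-1)d+j}$, $\mathfrak{b}^\theta_i=\theta_{Hd+i}$, $\mathfrak{v}^\theta_i=\theta_{H(d+1)+i}$, $\mathfrak{c}^\theta=\theta_{\mathfrak{d}}$. Let $\mathfrak{R}_r\in C^1(\mathbb{R},\mathbb{R})$, $r\in\mathbb{N}$, satisfy for all $x\in\mathbb{R}$ that $\lim_{r\to\infty}\big(|\mathfrak{R}_r(x)-\max\{x,0\}|+|(\mathfrak{R}_r)'(x)-\mathbb{1}_{(0,\infty)}(x)|\big)=0$ and $\sup_{r\in\mathbb{N}}\sup_{y\in[-|x|,|x|]}|(\mathfrak{R}_r)'(y)|<\infty$. Let $\mu$ be a finite measure on $\mathcal{B}([\mathscr{a},\mathscr{b}]^d)$. For $\theta\in\mathbb{R}^{\mathfrak{d}}$, $x\in\mathbb{R}^d$ let $\mathscr{N}^\theta(x)=\mathfrak{c}^\theta+\sum_{i=1}^H\mathfrak{v}^\theta_i\max\{\mathfrak{b}^\theta_i+\sum_{j=1}^d\mathfrak{w}^\theta_{i,j}x_j,0\}$, $\mathcal{L}(\theta)=\int_{[\mathscr{a},\mathscr{b}]^d}(f(y)-\mathscr{N}^\theta(y))^2\,\mu(\mathrm{d}y)$,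 and for $r\in\mathbb{N}$, $\mathfrak{L}_r(\theta)=\int_{[\mathscr{a},\mathscr{b}]^d}\big(f(y)-\mathfrak{c}^\theta-\sum_{i=1}^H\mathfrak{v}^\theta_i\,\mathfrak{R}_r(\mathfrak{b}^\theta_i+\sum_{j=1}^d\mathfrak{w}^\theta_{i,j}y_j)\big)^2\,\mu(\mathrm{d}y)$. Let $\mathcal{G}\colon\mathbb{R}^{\mathfrak{d}}\to\mathbb{R}^{\mathfrak{d}}$ satisfy $\mathcal{G}(\theta)=\lim_{r\to\infty}(\nabla\mathfrak{L}_r)(\theta)$ for every $\theta$ for which this limit exists ($\mathcal{G}$ is locally bounded and measurable). $\|\cdot\|$ is the Euclidean norm. *)

theory Defs
  imports "HOL-Analysis.Analysis"
begin

text \<open>Parameter vectors theta in R^dd are encoded as functions nat => real,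
  only the coordinates 1..dd being relevant.  Points of [a,b]^d are functions
  nat => real (coordinates 1..d), as in the product measure Pi_M {1..d}.\<close>

definition pdim :: "nat \<Rightarrow> nat \<Rightarrow> nat" where
  "pdim d H = d * H + 2 * H + 1"

definition wt :: "nat \<Rightarrow> (nat \<Rightarrow> real) \<Rightarrow> nat \<Rightarrow> nat \<Rightarrow> real" where
  "wt d \<theta> i j = \<theta> ((i - 1) * d + j)"

definition bt :: "nat \<Rightarrow> nat \<Rightarrow> (nat \<Rightarrow> real) \<Rightarrow> nat \<Rightarrow> real" where
  "bt d H \<theta> i = \<theta> (H * d + i)"

definition vt :: "nat \<Rightarrow> nat \<Rightarrow> (nat \<Rightarrow> real) \<Rightarrow> nat \<Rightarrow> real" where
  "vt d H \<theta> i = \<theta> (H * (d + 1) + i)"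

definition ct :: "nat \<Rightarrow> nat \<Rightarrow> (nat \<Rightarrow> real) \<Rightarrow> real" where
  "ct d H \<theta> = \<theta> (pdim d H)"

definition pnorm :: "nat \<Rightarrow> nat \<Rightarrow> (nat \<Rightarrow> real) \<Rightarrow> real" where
  "pnorm d H \<theta> = sqrt (\<Sum>k = 1..pdim d H. (\<theta> k)\<^sup>2)"

definition NN :: "nat \<Rightarrow> nat \<Rightarrow> (nat \<Rightarrow> real) \<Rightarrow> (nat \<Rightarrow> real) \<Rightarrow> real" where
  "NN d H \<theta> x = ct d H \<theta> +
     (\<Sum>i = 1..H. vt d H \<theta> i * max (bt d H \<theta> i + (\<Sum>j = 1..d. wt d \<theta> i j * x j)) 0)"

definition LL :: "nat \<Rightarrow> nat \<Rightarrow> ((nat \<Rightarrow> real) \<Rightarrow> real) \<Rightarrow> (nat \<Rightarrow> real) measure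
    \<Rightarrow> (nat \<Rightarrow> real) \<Rightarrow> real" where
  "LL d H f \<mu> \<theta> = (\<integral>y. (f y - NN d H \<theta> y)\<^sup>2 \<partial>\<mu>)"

definition LLr :: "nat \<Rightarrow> nat \<Rightarrow> ((nat \<Rightarrow> real) \<Rightarrow> real) \<Rightarrow> (nat \<Rightarrow> real) measure
    \<Rightarrow> (real \<Rightarrow> real) \<Rightarrow> (nat \<Rightarrow> real) \<Rightarrow> real" where
  "LLr d H f \<mu> Rr \<theta> = (\<integral>y. (f y - ct d H \<theta>
     - (\<Sum>i = 1..H. vt d H \<theta> i * Rr (bt d H \<theta> i + (\<Sum>j = 1..d. wt d \<theta> i j * y j))))\<^sup>2 \<partial>\<mu>)"

definition is_gradient :: "nat \<Rightarrow> ((nat \<Rightarrow> real) \<Rightarrow> real) \<Rightarrow> (nat \<Rightarrow> real) \<Rightarrow> (nat \<Rightarrow> real) \<Rightarrow> bool" where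
  "is_gradient n F \<theta> g \<longleftrightarrow>
     (\<forall>k\<in>{1..n}. ((\<lambda>h. F (\<theta>(k := \<theta> k + h))) has_real_derivative g k) (at 0))"

end

theory Submission
  imports Defs
begin

lemma prod_integrable:
  fixes G :: "real \<Rightarrow> real"
  assumes G: "integrable lborel G"
  shows "integrable (lborel \<Otimes>\<^sub>M lborel) (\<lambda>(u,v). G u * G v)"
proof -
  have [measurable]: "G \<in> borel_measurable lborel" using G by auto
  show ?thesis
  proof (rule lborel_pair.Fubini_integrable)
    show "(\<lambda>(u,v). G u * G v) \<in> borel_measurable (lborel \<Otimes>\<^sub>M lborel)" by measurable
    have "(\<lambda>u. \<integral>v. norm (case (u, v) of (u, v) \<Rightarrow> G u * G v) \<partial>lborel) = (\<lambda>u. \<bar>G u\<bar> * (\<integral>v. \<bar>G v\<bar> \<partial>lborel))"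
      by (auto simp: abs_mult)
    then show "integrable lborel (\<lambda>u. \<integral>v. norm (case (u, v) of (u, v) \<Rightarrow> G u * G v) \<partial>lborel)"
      using G by simp
    show "AE u in lborel. integrable lborel (\<lambda>v. case (u, v) of (u, v) \<Rightarrow> G u * G v)"
      using G by simp
  qed
qed

lemma core_sq:
  fixes G :: "real \<Rightarrow> real"
  assumes G: "integrable lborel G"
  defines "z \<equiv> (\<lambda>u. \<integral>v. indicator {..u} v * G v \<partial>lborel)"
  shows "integrable lborel (\<lambda>u. G u * z u)"
    and "(\<integral>u. G u \<partial>lborel)^2 = 2 * (\<integral>u. G u * z u \<partial>lborel)"
proof -
  have [measurable]: "G \<in> borel_measurable lborel" using G by auto
  define Y where "Y = (\<integral>u. G u \<partial>lborel)"
  have ind_int: "integrable lborel (\<lambda>v. indicator A v * G v)" if "A \<in> sets borel" for A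
    using integrable_mult_indicator[of A lborel G] that G by simp
  define h2 where "h2 = (\<lambda>u v. indicator {..<v} u * (G u * G v))"
  have [measurable]: "G \<in> borel_measurable borel" using G by (simp add: measurable_lborel1)
  have "(\<lambda>p::real\<times>real. (if snd p \<le> fst p then 1 else 0) * G (snd p)) \<in> borel_measurable (lborel \<Otimes>\<^sub>M lborel)"
    by measurable
  then have "case_prod (\<lambda>u v. indicator {..u} v * G v) \<in> borel_measurable (lborel \<Otimes>\<^sub>M lborel)"
    by (rule measurable_cong[THEN iffD1, rotated]) (auto simp: indicator_def)
  then have zm[measurable]: "z \<in> borel_measurable lborel"
    unfolding z_def by (rule lborel.borel_measurable_lebesgue_integral)
  have zb: "\<bar>z u\<bar> \<le> (\<integral>v. \<bar>G v\<bar> \<partial>lborel)" for u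
  proof -
    have "\<bar>z u\<bar> \<le> (\<integral>v. \<bar>indicator {..u} v * G v\<bar> \<partial>lborel)"
      unfolding z_def by (rule integral_abs_bound)
    also have "\<dots> \<le> (\<integral>v. \<bar>G v\<bar> \<partial>lborel)"
      using G integrable_mult_indicator[of "{..u}" lborel G]
      by (intro integral_mono integrable_abs) (auto simp: abs_mult indicator_def)
    finally show ?thesis .
  qed
  show Gz: "integrable lborel (\<lambda>u. G u * z u)"
  proof (rule Bochner_Integration.integrable_bound[where f="\<lambda>u. G u * (\<integral>v. \<bar>G v\<bar> \<partial>lborel)"])
    show "integrable lborel (\<lambda>u. G u * (\<integral>v. \<bar>G v\<bar> \<partial>lborel))" using G by simp
    show "AE x in lborel. norm (G x * z x) \<le> norm (G x * (\<integral>v. \<bar>G v\<bar> \<partial>lborel))"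
      using zb by (auto simp: abs_mult intro!: mult_left_mono)
  qed simp
  have h2i: "integrable (lborel \<Otimes>\<^sub>M lborel) (case_prod h2)"
  proof (rule Bochner_Integration.integrable_bound[OF prod_integrable[OF G]])
    have "(\<lambda>p::real\<times>real. (if fst p < snd p then 1 else 0) * (G (fst p) * G (snd p))) \<in> borel_measurable (lborel \<Otimes>\<^sub>M lborel)"
      by measurable
    then show "case_prod h2 \<in> borel_measurable (lborel \<Otimes>\<^sub>M lborel)"
      unfolding h2_def by (rule measurable_cong[THEN iffD1, rotated]) (auto simp: indicator_def)
    show "AE x in lborel \<Otimes>\<^sub>M lborel. norm (case x of (u, v) \<Rightarrow> h2 u v) \<le> norm (case x of (u, v) \<Rightarrow> G u * G v)"
      by (auto simp: h2_def indicator_def)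
  qed
  have inner_u: "(\<integral>u. h2 u v \<partial>lborel) = G v * z v" for v
  proof -
    have "(\<integral>u. h2 u v \<partial>lborel) = G v * (\<integral>u. indicator {..<v} u * G u \<partial>lborel)"
    proof -
      have "(\<lambda>u. h2 u v) = (\<lambda>u. G v * (indicator {..<v} u * G u))" unfolding h2_def by (auto simp: mult_ac)
      then show ?thesis by (simp only: integral_mult_right_zero)
    qed
    also have "(\<integral>u. indicator {..<v} u * G u \<partial>lborel) = z v"
      unfolding z_def
    proof (rule integral_cong_AE)
      show "AE x in lborel. indicator {..<v} x * G x = indicator {..v} x * G x"
        using AE_lborel_singleton[of v] by eventually_elim (auto simp: indicator_def)
    qed auto
    finally show ?thesis .
  qed
  have inner_v: "(\<integral>v. h2 u v \<partial>lborel) = G u * (Y - z u)" for u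
  proof -
    have "(\<integral>v. h2 u v \<partial>lborel) = G u * (\<integral>v. indicator {u<..} v * G v \<partial>lborel)"
    proof -
      have "(\<lambda>v. h2 u v) = (\<lambda>v. G u * (indicator {u<..} v * G v))" unfolding h2_def by (auto simp: indicator_def)
      then show ?thesis by (simp only: integral_mult_right_zero)
    qed
    also have "(\<integral>v. indicator {u<..} v * G v \<partial>lborel) = (\<integral>v. G v - indicator {..u} v * G v \<partial>lborel)"
      by (auto intro!: Bochner_Integration.integral_cong simp: indicator_def)
    also have "\<dots> = Y - z u"
      unfolding Y_def z_def using G by (subst Bochner_Integration.integral_diff) (auto intro!: ind_int)
    finally show ?thesis .
  qed
  have "(\<integral>v. (\<integral>u. h2 u v \<partial>lborel) \<partial>lborel) = (\<integral>u. (\<integral>v. h2 u v \<partial>lborel) \<partial>lborel)"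
    by (rule lborel_pair.Fubini_integral[OF h2i])
  then have "(\<integral>v. G v * z v \<partial>lborel) = (\<integral>u. G u * (Y - z u) \<partial>lborel)"
    by (simp add: inner_u inner_v)
  also have "\<dots> = (\<integral>u. Y * G u - G u * z u \<partial>lborel)"
    by (auto intro!: Bochner_Integration.integral_cong simp: algebra_simps)
  also have "\<dots> = Y * Y - (\<integral>u. G u * z u \<partial>lborel)"
    using G Gz by (subst Bochner_Integration.integral_diff) (auto simp: Y_def)
  finally show "(\<integral>u. G u \<partial>lborel)^2 = 2 * (\<integral>u. G u * z u \<partial>lborel)"
    by (simp add: Y_def power2_eq_square)
qed

lemma sq_chain:
  fixes x g :: "real \<Rightarrow> real" and t :: real
  assumes t: "0 \<le> t" and gi: "set_integrable lborel {0..t} g"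
    and xe: "\<And>s. 0 \<le> s \<Longrightarrow> s \<le> t \<Longrightarrow> x s = x 0 - (LINT u:{0..s}|lborel. g u)"
  shows "set_integrable lborel {0..t} (\<lambda>u. x u * g u)"
    and "(x t)^2 = (x 0)^2 - 2 * (LINT u:{0..t}|lborel. x u * g u)"
proof -
  define G where "G = (\<lambda>u. indicator {0..t} u * g u)"
  have G: "integrable lborel G" using gi unfolding set_integrable_def G_def by simp
  define z where "z = (\<lambda>u. \<integral>v. indicator {..u} v * G v \<partial>lborel)"
  note cs = core_sq[OF G]
  have zx: "z u = x 0 - x u" if "u \<in> {0..t}" for u
  proof -
    have "z u = (LINT v:{0..u}|lborel. g v)"
      unfolding z_def set_lebesgue_integral_def G_def using that
      by (auto intro!: Bochner_Integration.integral_cong simp: indicator_def)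
    then show ?thesis using xe[of u] that by simp
  qed
  have eq: "(\<lambda>u. indicator {0..t} u *\<^sub>R (x u * g u)) = (\<lambda>u. x 0 * G u - G u * z u)"
    by (auto simp: G_def zx algebra_simps indicator_def)
  show "set_integrable lborel {0..t} (\<lambda>u. x u * g u)"
    unfolding set_integrable_def eq using G cs(1) by (auto simp: z_def)
  have Y: "(\<integral>u. G u \<partial>lborel) = x 0 - x t"
    using xe[of t] t unfolding G_def set_lebesgue_integral_def by simp
  have "(LINT u:{0..t}|lborel. x u * g u) = (\<integral>u. x 0 * G u - G u * z u \<partial>lborel)"
    unfolding set_lebesgue_integral_def eq ..
  also have "\<dots> = x 0 * (\<integral>u. G u \<partial>lborel) - (\<integral>u. G u * z u \<partial>lborel)"
    using G cs(1) by (subst Bochner_Integration.integral_diff) (auto simp: z_def)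
  finally show "(x t)^2 = (x 0)^2 - 2 * (LINT u:{0..t}|lborel. x u * g u)"
    using cs(2) Y unfolding z_def by (simp add: power2_eq_square algebra_simps)
qed

locale setting =
  fixes d H :: nat and a b :: real and f :: "(nat\<Rightarrow>real)\<Rightarrow>real" and \<mu> :: "(nat\<Rightarrow>real) measure"
  assumes ab: "a < b" and f_cont: "continuous_on (PiE {1..d} (\<lambda>_. {a..b})) f"
  and \<mu>_sets: "sets \<mu> = sets (Pi\<^sub>M {1..d} (\<lambda>_. restrict_space lborel {a..b}))"
  and \<mu>_fin: "finite_measure \<mu>"
begin

lemma space_mu: "space \<mu> = PiE {1..d} (\<lambda>_. {a..b})"
  using sets_eq_imp_space_eq[OF \<mu>_sets] by (simp add: space_PiM space_restrict_space)

lemma coord_ab: "x \<in> space \<mu> \<Longrightarrow> j \<in> {1..d} \<Longrightarrow> a \<le> x j \<and> x j \<le> b"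
  unfolding space_mu by (auto simp: PiE_iff)

lemma coord_bnd: "x \<in> space \<mu> \<Longrightarrow> j \<in> {1..d} \<Longrightarrow> \<bar>x j\<bar> \<le> \<bar>a\<bar> + \<bar>b\<bar>"
  using coord_ab[of x j] by linarith

lemma coord_meas[measurable]: "(\<lambda>x. x j) \<in> borel_measurable \<mu>"
proof (cases "j \<in> {1..d}")
  case True
  have "(\<lambda>x. x j) \<in> measurable (Pi\<^sub>M {1..d} (\<lambda>_. restrict_space lborel {a..b})) (restrict_space lborel {a..b})"
    using True by (rule measurable_component_singleton)
  then have "(\<lambda>x. x j) \<in> measurable \<mu> (restrict_space lborel {a..b})"
    using measurable_cong_sets[OF \<mu>_sets refl] by blast
  moreover have "(\<lambda>x. x) \<in> measurable (restrict_space lborel {a..b}) borel"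
    by (intro measurable_restrict_space1) (simp add: measurable_lborel1)
  ultimately show ?thesis using measurable_comp[of "\<lambda>x. x j" \<mu> _ "\<lambda>x. x" borel] by (simp add: comp_def)
next
  case False
  then have "\<And>x. x \<in> space \<mu> \<Longrightarrow> x j = undefined" unfolding space_mu by (auto simp: PiE_iff extensional_def)
  then have "(\<lambda>x. x j) \<in> borel_measurable \<mu> \<longleftrightarrow> (\<lambda>x. undefined::real) \<in> borel_measurable \<mu>"
    by (intro measurable_cong) auto
  then show ?thesis by simp
qed

lemma id_meas: "(\<lambda>x. x) \<in> measurable \<mu> (restrict_space borel (PiE {1..d} (\<lambda>_. {a..b})))"
proof (rule measurable_restrict_space2)
  show "(\<lambda>x. x) \<in> space \<mu> \<rightarrow> PiE {1..d} (\<lambda>_. {a..b})" using space_mu by auto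
  show "(\<lambda>x::nat\<Rightarrow>real. x) \<in> borel_measurable \<mu>"
    by (rule measurable_coordinatewise_then_product) simp
qed

lemma f_meas[measurable]: "f \<in> borel_measurable \<mu>"
proof -
  have "f \<in> borel_measurable (restrict_space borel (PiE {1..d} (\<lambda>_. {a..b})))"
    by (rule borel_measurable_continuous_on_restrict[OF f_cont])
  then show ?thesis using measurable_comp[OF id_meas] by (simp add: comp_def)
qed

lemma X_compact: "compact (PiE {1..d} (\<lambda>_. {a..b::real}))"
proof -
  define S where "S = (\<lambda>i::nat. if i \<in> {1..d} then {a..b} else {undefined::real})"
  have "x \<in> PiE {1..d} (\<lambda>_. {a..b})" if x: "x \<in> PiE UNIV S" for x
  proof -
    have "\<forall>i\<in>{1..d}. x i \<in> {a..b}" using PiE_mem[OF x] by (metis S_def UNIV_I)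
    moreover have "\<forall>i. i \<notin> {1..d} \<longrightarrow> x i = undefined" using PiE_mem[OF x] by (metis S_def UNIV_I singletonD)
    ultimately show ?thesis by (auto simp: PiE_iff extensional_def)
  qed
  moreover have "x \<in> PiE UNIV S" if x: "x \<in> PiE {1..d} (\<lambda>_. {a..b})" for x
  proof -
    have "x i \<in> S i" for i
    proof (cases "i \<in> {1..d}")
      case True then show ?thesis using PiE_mem[OF x True] by (simp add: S_def)
    next
      case False then show ?thesis using PiE_arb[OF x False] by (auto simp: S_def)
    qed
    then show ?thesis by (simp add: PiE_UNIV_domain)
  qed
  ultimately have eq: "PiE {1..d} (\<lambda>_. {a..b}) = PiE UNIV S"
    by blast
  have "compactin (product_topology (\<lambda>i. euclidean) UNIV) (PiE UNIV S)"
    unfolding compactin_PiE S_def by auto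
  then show ?thesis unfolding eq euclidean_product_topology by simp
qed

lemma f_bnd: "\<exists>Mf. \<forall>x\<in>space \<mu>. \<bar>f x\<bar> \<le> Mf"
proof -
  have "compact (f ` PiE {1..d} (\<lambda>_. {a..b}))"
    by (rule compact_continuous_image[OF f_cont X_compact])
  then have "bounded (f ` PiE {1..d} (\<lambda>_. {a..b}))" by (rule compact_imp_bounded)
  then show ?thesis unfolding bounded_iff space_mu by auto
qed

end

definition uu :: "nat \<Rightarrow> nat \<Rightarrow> (nat\<Rightarrow>real) \<Rightarrow> nat \<Rightarrow> (nat\<Rightarrow>real) \<Rightarrow> real" where
  "uu d H \<theta> i y = bt d H \<theta> i + (\<Sum>j=1..d. wt d \<theta> i j * y j)"

definition PP :: "nat \<Rightarrow> nat \<Rightarrow> (real\<Rightarrow>real) \<Rightarrow> (nat\<Rightarrow>real) \<Rightarrow> (nat\<Rightarrow>real) \<Rightarrow> real" where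
  "PP d H \<rho> \<theta> y = ct d H \<theta> + (\<Sum>i=1..H. vt d H \<theta> i * \<rho> (uu d H \<theta> i y))"

definition dl :: "nat \<Rightarrow> nat \<Rightarrow> real" where "dl k m = (if k = m then 1 else 0)"

definition ee :: "nat \<Rightarrow> nat \<Rightarrow> nat \<Rightarrow> nat \<Rightarrow> (nat\<Rightarrow>real) \<Rightarrow> real" where
  "ee d H k i y = dl k (H*d+i) + (\<Sum>j=1..d. dl k ((i-1)*d+j) * y j)"

definition DD :: "nat \<Rightarrow> nat \<Rightarrow> (real\<Rightarrow>real) \<Rightarrow> (real\<Rightarrow>real) \<Rightarrow> (nat\<Rightarrow>real) \<Rightarrow> nat \<Rightarrow> (nat\<Rightarrow>real) \<Rightarrow> real" where
  "DD d H \<rho> \<rho>' \<theta> k y = dl k (pdim d H) + (\<Sum>i=1..H. dl k (H*(d+1)+i) * \<rho> (uu d H \<theta> i y)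
      + vt d H \<theta> i * \<rho>' (uu d H \<theta> i y) * ee d H k i y)"

lemma NN_PP: "NN d H \<theta> y = PP d H (\<lambda>z. max z 0) \<theta> y"
  by (simp add: NN_def PP_def uu_def)

lemma upd_ct: "ct d H (\<theta>(k := \<theta> k + h)) = ct d H \<theta> + h * dl k (pdim d H)"
  by (auto simp: ct_def dl_def)
lemma upd_vt: "vt d H (\<theta>(k := \<theta> k + h)) i = vt d H \<theta> i + h * dl k (H*(d+1)+i)"
  by (auto simp: vt_def dl_def)
lemma upd_bt: "bt d H (\<theta>(k := \<theta> k + h)) i = bt d H \<theta> i + h * dl k (H*d+i)"
  by (auto simp: bt_def dl_def)
lemma upd_wt: "wt d (\<theta>(k := \<theta> k + h)) i j = wt d \<theta> i j + h * dl k ((i-1)*d+j)"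
  by (auto simp: wt_def dl_def)
lemma upd_uu: "uu d H (\<theta>(k := \<theta> k + h)) i y = uu d H \<theta> i y + h * ee d H k i y"
  unfolding uu_def ee_def upd_bt upd_wt by (simp add: algebra_simps sum.distrib sum_distrib_left)

lemma PP_upd: "PP d H \<rho> (\<theta>(k := \<theta> k + h)) y = ct d H \<theta> + h * dl k (pdim d H) +
   (\<Sum>i=1..H. (vt d H \<theta> i + h * dl k (H*(d+1)+i)) * \<rho> (uu d H \<theta> i y + h * ee d H k i y))"
  by (simp add: PP_def upd_ct upd_vt upd_uu)

lemma rho_chain:
  assumes "\<And>z. (\<rho> has_real_derivative \<rho>' z) (at z)" "(g has_real_derivative g') (at s)"
  shows "((\<lambda>h. \<rho> (g h)) has_real_derivative \<rho>' (g s) * g') (at s)"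
  using DERIV_chain2[OF assms(1) assms(2)] .

lemma PP_deriv:
  assumes rd: "\<And>z. (\<rho> has_real_derivative \<rho>' z) (at z)"
  shows "((\<lambda>h. PP d H \<rho> (\<theta>(k := \<theta> k + h)) y) has_real_derivative DD d H \<rho> \<rho>' (\<theta>(k := \<theta> k + s)) k y) (at s)"
proof -
  have "((\<lambda>h. ct d H \<theta> + h * dl k (pdim d H) +
   (\<Sum>i=1..H. (vt d H \<theta> i + h * dl k (H*(d+1)+i)) * \<rho> (uu d H \<theta> i y + h * ee d H k i y)))
    has_real_derivative DD d H \<rho> \<rho>' (\<theta>(k := \<theta> k + s)) k y) (at s)"
    unfolding DD_def upd_vt upd_uu
    by (rule derivative_eq_intros rho_chain[OF rd] refl)+
      (simp add: algebra_simps sum.distrib)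
  then show ?thesis by (simp add: PP_upd)
qed

lemma idx_w: fixes i j d H :: nat shows "i \<in> {1..H} \<Longrightarrow> j \<in> {1..d} \<Longrightarrow> 1 \<le> (i-1)*d+j \<and> (i-1)*d+j \<le> H*d"
proof -
  assume i: "i \<in> {1..H}" and j: "j \<in> {1..d}"
  have "i - 1 \<le> H - 1" using i by auto
  then have m1: "(i-1)*d \<le> (H-1)*d" by (rule mult_le_mono1)
  have m2: "(H-1)*d + d = H*d" using i by (cases H) auto
  have "(i-1)*d + j \<le> (H-1)*d + d" using m1 j by (intro add_mono) auto
  then show ?thesis using j m2 by auto
qed

lemma pdim_eq: "pdim d H = H*d + 2*H + 1" by (simp add: pdim_def mult.commute)

lemma sum_abs_bound:
  fixes f :: "nat \<Rightarrow> real"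
  assumes "\<And>i. i \<in> A \<Longrightarrow> \<bar>f i\<bar> \<le> K" "finite A"
  shows "\<bar>\<Sum>i\<in>A. f i\<bar> \<le> real (card A) * K"
  using order_trans[OF sum_abs sum_bounded_above[of A "\<lambda>i. \<bar>f i\<bar>" K]] assms by auto

lemma abs_dl: "\<bar>dl k m\<bar> \<le> 1" by (simp add: dl_def)

lemma bounds:
  fixes \<theta> y :: "nat \<Rightarrow> real" and T B Rb Rb' :: real
  assumes th: "\<And>m. m \<in> {1..pdim d H} \<Longrightarrow> \<bar>\<theta> m\<bar> \<le> T"
    and yb: "\<And>j. j \<in> {1..d} \<Longrightarrow> \<bar>y j\<bar> \<le> B"
    and rb: "\<And>z. \<bar>z\<bar> \<le> T + d*(T*B) \<Longrightarrow> \<bar>\<rho> z\<bar> \<le> Rb"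
    and rb': "\<And>z. \<bar>z\<bar> \<le> T + d*(T*B) \<Longrightarrow> \<bar>\<rho>' z\<bar> \<le> Rb'"
    and T: "0 \<le> T" and B: "0 \<le> B"
  shows "\<bar>PP d H \<rho> \<theta> y\<bar> \<le> T + H*(T*Rb)"
    and "\<bar>DD d H \<rho> \<rho>' \<theta> k y\<bar> \<le> 1 + H*(Rb + T*(Rb'*(1 + d*(1*B))))"
proof -
  have Rb: "0 \<le> Rb" using rb[of 0] T B by auto
  have Rb': "0 \<le> Rb'" using rb'[of 0] T B by auto
  have uub: "\<bar>uu d H \<theta> i y\<bar> \<le> T + d*(T*B)" if i: "i \<in> {1..H}" for i
  proof -
    have "\<bar>bt d H \<theta> i\<bar> \<le> T" unfolding bt_def using i by (intro th) (auto simp: pdim_def)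
    moreover have "\<bar>\<Sum>j=1..d. wt d \<theta> i j * y j\<bar> \<le> real (card {1..d}) * (T*B)"
    proof (rule sum_abs_bound)
      fix j assume j: "j \<in> {1..d}"
      have "\<bar>wt d \<theta> i j\<bar> \<le> T" unfolding wt_def using idx_w[OF i j] by (intro th) (auto simp: pdim_eq)
      then show "\<bar>wt d \<theta> i j * y j\<bar> \<le> T * B" unfolding abs_mult using yb[OF j] T
        by (intro mult_mono) auto
    qed simp
    ultimately show ?thesis unfolding uu_def by simp
  qed
  have "\<bar>ct d H \<theta>\<bar> \<le> T" unfolding ct_def by (intro th) (auto simp: pdim_def)
  moreover have "\<bar>\<Sum>i=1..H. vt d H \<theta> i * \<rho> (uu d H \<theta> i y)\<bar> \<le> real (card {1..H}) * (T*Rb)"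
  proof (rule sum_abs_bound)
    fix i assume i: "i \<in> {1..H}"
    have "\<bar>vt d H \<theta> i\<bar> \<le> T" unfolding vt_def using i by (intro th) (auto simp: pdim_eq)
    then show "\<bar>vt d H \<theta> i * \<rho> (uu d H \<theta> i y)\<bar> \<le> T * Rb" unfolding abs_mult using rb[OF uub[OF i]] T
      by (intro mult_mono) auto
  qed simp
  ultimately show "\<bar>PP d H \<rho> \<theta> y\<bar> \<le> T + H*(T*Rb)" unfolding PP_def by simp
  have "\<bar>\<Sum>i=1..H. dl k (H*(d+1)+i) * \<rho> (uu d H \<theta> i y) + vt d H \<theta> i * \<rho>' (uu d H \<theta> i y) * ee d H k i y\<bar>
     \<le> real (card {1..H}) * (Rb + T*(Rb'*(1 + d*(1*B))))"
  proof (rule sum_abs_bound)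
    fix i assume i: "i \<in> {1..H}"
    have vb: "\<bar>vt d H \<theta> i\<bar> \<le> T" unfolding vt_def using i by (intro th) (auto simp: pdim_eq)
    have eb: "\<bar>ee d H k i y\<bar> \<le> 1 + d*(1*B)"
    proof -
      have "\<bar>\<Sum>j=1..d. dl k ((i-1)*d+j) * y j\<bar> \<le> real (card {1..d}) * (1*B)"
      proof (rule sum_abs_bound)
        fix j assume "j \<in> {1..d}"
        then show "\<bar>dl k ((i-1)*d+j) * y j\<bar> \<le> 1 * B"
          unfolding abs_mult by (intro mult_mono abs_dl yb) auto
      qed simp
      then show ?thesis unfolding ee_def using abs_dl[of k "H*d+i"] by simp
    qed
    have "\<bar>dl k (H*(d+1)+i) * \<rho> (uu d H \<theta> i y)\<bar> \<le> 1 * Rb"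
      unfolding abs_mult by (intro mult_mono abs_dl rb uub i) auto
    moreover have "\<bar>vt d H \<theta> i * \<rho>' (uu d H \<theta> i y) * ee d H k i y\<bar> \<le> T * (Rb' * (1 + d*(1*B)))"
      unfolding abs_mult mult.assoc using vb eb rb'[OF uub[OF i]] T Rb' B
      by (intro mult_mono) auto
    ultimately show "\<bar>dl k (H*(d+1)+i) * \<rho> (uu d H \<theta> i y) + vt d H \<theta> i * \<rho>' (uu d H \<theta> i y) * ee d H k i y\<bar>
      \<le> Rb + T*(Rb'*(1 + d*(1*B)))" by linarith
  qed simp
  then show "\<bar>DD d H \<rho> \<rho>' \<theta> k y\<bar> \<le> 1 + H*(Rb + T*(Rb'*(1 + d*(1*B))))"
    unfolding DD_def using abs_dl[of k "pdim d H"] by simp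
qed

lemma sum_dl: "m \<in> A \<Longrightarrow> finite A \<Longrightarrow> (\<Sum>k\<in>A. \<theta> k * dl k m) = \<theta> m"
  unfolding dl_def by (simp add: if_distrib[of "\<lambda>x. \<theta> _ * x"] cong: if_cong)

lemma sum_ee: assumes i: "i \<in> {1..H}"
  shows "(\<Sum>k=1..pdim d H. \<theta> k * ee d H k i y) = uu d H \<theta> i y"
proof -
  have "(\<Sum>k=1..pdim d H. \<theta> k * ee d H k i y) =
      (\<Sum>k=1..pdim d H. \<theta> k * dl k (H*d+i)) + (\<Sum>j=1..d. (\<Sum>k=1..pdim d H. \<theta> k * dl k ((i-1)*d+j)) * y j)"
  proof -
    have "(\<Sum>k=1..pdim d H. \<theta> k * ee d H k i y) =
      (\<Sum>k=1..pdim d H. \<theta> k * dl k (H*d+i)) + (\<Sum>k=1..pdim d H. \<Sum>j=1..d. \<theta> k * dl k ((i-1)*d+j) * y j)"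
      unfolding ee_def sum.distrib[symmetric] by (intro sum.cong refl) (simp add: sum_distrib_left algebra_simps)
    also have "\<dots> = (\<Sum>k=1..pdim d H. \<theta> k * dl k (H*d+i)) + (\<Sum>j=1..d. \<Sum>k=1..pdim d H. \<theta> k * dl k ((i-1)*d+j) * y j)"
      by (subst sum.swap) (rule refl)
    finally show ?thesis by (simp add: sum_distrib_right)
  qed
  also have "\<dots> = bt d H \<theta> i + (\<Sum>j=1..d. wt d \<theta> i j * y j)"
  proof -
    have "(\<Sum>k=1..pdim d H. \<theta> k * dl k (H*d+i)) = bt d H \<theta> i"
      unfolding bt_def using i by (intro sum_dl) (auto simp: pdim_eq)
    moreover have "(\<Sum>k=1..pdim d H. \<theta> k * dl k ((i-1)*d+j)) = wt d \<theta> i j" if j: "j \<in> {1..d}" for j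
      unfolding wt_def using idx_w[OF i j] by (intro sum_dl) (auto simp: pdim_eq)
    ultimately show ?thesis by simp
  qed
  finally show ?thesis unfolding uu_def .
qed

lemma sum_DD:
  "(\<Sum>k=1..pdim d H. \<theta> k * DD d H \<rho> \<rho>' \<theta> k y) =
    ct d H \<theta> + (\<Sum>i=1..H. vt d H \<theta> i * (\<rho> (uu d H \<theta> i y) + \<rho>' (uu d H \<theta> i y) * uu d H \<theta> i y))"
proof -
  have "(\<Sum>k=1..pdim d H. \<theta> k * DD d H \<rho> \<rho>' \<theta> k y) =
     (\<Sum>k=1..pdim d H. \<theta> k * dl k (pdim d H)) + (\<Sum>i=1..H.
       (\<Sum>k=1..pdim d H. \<theta> k * dl k (H*(d+1)+i)) * \<rho> (uu d H \<theta> i y)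
      + vt d H \<theta> i * \<rho>' (uu d H \<theta> i y) * (\<Sum>k=1..pdim d H. \<theta> k * ee d H k i y))"
  proof -
    have "(\<Sum>k=1..pdim d H. \<theta> k * DD d H \<rho> \<rho>' \<theta> k y) =
      (\<Sum>k=1..pdim d H. \<theta> k * dl k (pdim d H)) + (\<Sum>k=1..pdim d H. \<Sum>i=1..H.
       \<theta> k * dl k (H*(d+1)+i) * \<rho> (uu d H \<theta> i y)
      + vt d H \<theta> i * \<rho>' (uu d H \<theta> i y) * (\<theta> k * ee d H k i y))"
      unfolding DD_def sum.distrib[symmetric] by (intro sum.cong refl) (simp add: sum_distrib_left algebra_simps)
    also have "\<dots> = (\<Sum>k=1..pdim d H. \<theta> k * dl k (pdim d H)) + (\<Sum>i=1..H. \<Sum>k=1..pdim d H.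
       \<theta> k * dl k (H*(d+1)+i) * \<rho> (uu d H \<theta> i y)
      + vt d H \<theta> i * \<rho>' (uu d H \<theta> i y) * (\<theta> k * ee d H k i y))"
      by (subst sum.swap) (rule refl)
    also have "\<dots> = (\<Sum>k=1..pdim d H. \<theta> k * dl k (pdim d H)) + (\<Sum>i=1..H.
       (\<Sum>k=1..pdim d H. \<theta> k * dl k (H*(d+1)+i)) * \<rho> (uu d H \<theta> i y)
      + vt d H \<theta> i * \<rho>' (uu d H \<theta> i y) * (\<Sum>k=1..pdim d H. \<theta> k * ee d H k i y))"
      by (simp add: sum.distrib sum_distrib_left sum_distrib_right)
    finally show ?thesis .
  qed
  also have "\<dots> = ct d H \<theta> + (\<Sum>i=1..H. vt d H \<theta> i * \<rho> (uu d H \<theta> i y)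
      + vt d H \<theta> i * \<rho>' (uu d H \<theta> i y) * uu d H \<theta> i y)"
  proof -
    have "(\<Sum>k=1..pdim d H. \<theta> k * dl k (pdim d H)) = ct d H \<theta>"
      unfolding ct_def by (intro sum_dl) (auto simp: pdim_eq)
    moreover have "(\<Sum>k=1..pdim d H. \<theta> k * dl k (H*(d+1)+i)) = vt d H \<theta> i" if i: "i \<in> {1..H}" for i
      unfolding vt_def using i by (intro sum_dl) (auto simp: pdim_eq)
    ultimately show ?thesis using sum_ee by (auto intro!: sum.cong)
  qed
  finally show ?thesis by (simp add: algebra_simps)
qed

lemma sum_DD_relu:
  "(\<Sum>k=1..pdim d H. \<theta> k * DD d H (\<lambda>z. max z 0) (indicator {0<..}) \<theta> k y) = 2 * NN d H \<theta> y - ct d H \<theta>"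
proof -
  have "\<And>z::real. max z 0 + indicator {0<..} z * z = 2 * max z 0" by (auto simp: indicator_def)
  then show ?thesis unfolding sum_DD NN_PP PP_def by (simp add: sum_distrib_left algebra_simps)
qed

lemma DD_c: "DD d H \<rho> \<rho>' \<theta> (pdim d H) y = 1"
proof -
  have "ee d H (pdim d H) i y = 0" if i: "i \<in> {1..H}" for i
  proof -
    have "dl (pdim d H) ((i-1)*d+j) = 0" if j: "j \<in> {1..d}" for j
      using idx_w[OF i j] by (auto simp: dl_def pdim_eq)
    then show ?thesis unfolding ee_def using i by (auto simp: dl_def pdim_eq)
  qed
  moreover have "dl (pdim d H) (H*(d+1)+i) = 0" if i: "i \<in> {1..H}" for i
    using i by (auto simp: dl_def pdim_eq)
  ultimately show ?thesis unfolding DD_def by (simp add: dl_def)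
qed

lemma DUI:
  fixes M :: "'a measure" and F F' :: "real \<Rightarrow> 'a \<Rightarrow> real"
  assumes fin: "finite_measure M"
  and meas: "\<And>h. F h \<in> borel_measurable M"
  and meas': "F' 0 \<in> borel_measurable M"
  and der: "\<And>x s. x \<in> space M \<Longrightarrow> \<bar>s\<bar> \<le> 1 \<Longrightarrow> ((\<lambda>h. F h x) has_real_derivative F' s x) (at s)"
  and bnd: "\<And>x s. x \<in> space M \<Longrightarrow> \<bar>s\<bar> \<le> 1 \<Longrightarrow> \<bar>F' s x\<bar> \<le> K"
  and bnd0: "\<And>x. x \<in> space M \<Longrightarrow> \<bar>F 0 x\<bar> \<le> K0"
  shows "((\<lambda>h. \<integral>x. F h x \<partial>M) has_real_derivative (\<integral>x. F' 0 x \<partial>M)) (at 0)"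
proof -
  interpret finite_measure M by (rule fin)
  have lip: "\<bar>F h x - F 0 x\<bar> \<le> K * \<bar>h\<bar>" if x: "x \<in> space M" and h: "\<bar>h\<bar> \<le> 1" for x h
  proof -
    have "norm ((\<lambda>h. F h x) h - (\<lambda>h. F h x) 0) \<le> K * norm (h - 0)"
    proof (rule field_differentiable_bound[where S="{-1..1}" and f'="\<lambda>s. F' s x"])
      fix z :: real assume "z \<in> {-1..1}"
      then have z: "\<bar>z\<bar> \<le> 1" by auto
      show "((\<lambda>h. F h x) has_field_derivative F' z x) (at z within {-1..1})"
        using der[OF x z] by (rule has_field_derivative_at_within)
      show "norm (F' z x) \<le> K" using bnd[OF x z] by simp
    qed (use h in auto)
    then show ?thesis by simp
  qed
  have intF: "integrable M (F h)" if h: "\<bar>h\<bar> \<le> 1" for h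
  proof (rule integrable_const_bound[where B="K0 + K"])
    have "K \<ge> 0" if "x \<in> space M" for x using bnd[OF that, of 0] by auto
    then show "AE x in M. norm (F h x) \<le> K0 + K"
      using lip[OF _ h] bnd0 h
      by (auto intro!: AE_I2 simp: abs_le_iff) (smt (verit, best) mult_left_le mult_minus_left)+
  qed (rule meas)
  show ?thesis
    unfolding has_field_derivative_iff tendsto_at_iff_sequentially
  proof (intro allI impI)
    fix X :: "nat \<Rightarrow> real" assume X0: "\<forall>i. X i \<in> UNIV - {0}" and X: "X \<longlonglongrightarrow> 0"
    have ev: "\<forall>\<^sub>F i in sequentially. \<bar>X i\<bar> \<le> 1"
      using X unfolding tendsto_iff by (auto elim!: allE[of _ 1] eventually_mono simp: dist_real_def)
    define s where "s = (\<lambda>i x. if \<bar>X i\<bar> \<le> 1 then (F (X i) x - F 0 x) / X i else F' 0 x)"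
    have sm: "s i \<in> borel_measurable M" for i
      unfolding s_def using meas meas' by (cases "\<bar>X i\<bar> \<le> 1") auto
    have lim: "(\<lambda>i. integral\<^sup>L M (s i)) \<longlonglongrightarrow> integral\<^sup>L M (F' 0)"
    proof (rule integral_dominated_convergence[where w="\<lambda>_. K"])
      show "F' 0 \<in> borel_measurable M" by (rule meas')
      show "s i \<in> borel_measurable M" for i by (rule sm)
      show "integrable M (\<lambda>_. K)" by simp
      show "AE x in M. (\<lambda>i. s i x) \<longlonglongrightarrow> F' 0 x"
      proof (rule AE_I2)
        fix x assume x: "x \<in> space M"
        have "((\<lambda>h. (F h x - F 0 x) / (h - 0)) \<longlongrightarrow> F' 0 x) (at 0)"
          using der[OF x, of 0] unfolding has_field_derivative_iff by simp
        then have "((\<lambda>h. (F h x - F 0 x) / (h - 0)) \<circ> X) \<longlonglongrightarrow> F' 0 x"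
          unfolding tendsto_at_iff_sequentially using X0 X by blast
        then show "(\<lambda>i. s i x) \<longlonglongrightarrow> F' 0 x"
          by (rule Lim_transform_eventually) (use ev in \<open>auto elim!: eventually_mono simp: s_def\<close>)
      qed
      show "AE x in M. norm (s i x) \<le> K" for i
      proof (rule AE_I2)
        fix x assume x: "x \<in> space M"
        show "norm (s i x) \<le> K"
        proof (cases "\<bar>X i\<bar> \<le> 1")
          case True
          have "X i \<noteq> 0" using X0 by auto
          then show ?thesis using True lip[OF x True] by (simp add: s_def abs_divide divide_le_eq)
        next
          case False then show ?thesis using bnd[OF x, of 0] by (simp add: s_def)
        qed
      qed
    qed
    show "((\<lambda>h. ((\<integral>x. F h x \<partial>M) - (\<integral>x. F 0 x \<partial>M)) / (h - 0)) \<circ> X) \<longlonglongrightarrow> (\<integral>x. F' 0 x \<partial>M)"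
    proof (rule Lim_transform_eventually[OF lim])
      show "\<forall>\<^sub>F i in sequentially. integral\<^sup>L M (s i) = ((\<lambda>h. ((\<integral>x. F h x \<partial>M) - (\<integral>x. F 0 x \<partial>M)) / (h - 0)) \<circ> X) i"
        using ev
      proof (rule eventually_mono)
        fix i assume i: "\<bar>X i\<bar> \<le> 1"
        have "integral\<^sup>L M (s i) = (\<integral>x. (F (X i) x - F 0 x) / X i \<partial>M)"
          using i by (simp add: s_def)
        also have "\<dots> = ((\<integral>x. F (X i) x \<partial>M) - (\<integral>x. F 0 x \<partial>M)) / X i"
          using intF[OF i] intF[of 0] by simp
        finally show "integral\<^sup>L M (s i) = ((\<lambda>h. ((\<integral>x. F h x \<partial>M) - (\<integral>x. F 0 x \<partial>M)) / (h - 0)) \<circ> X) i"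
          by simp
      qed
    qed
  qed
qed

locale setting2 = setting d H a b f \<mu> for d H a b f \<mu> +
  fixes R :: "nat \<Rightarrow> real \<Rightarrow> real"
  assumes R_C1: "\<And>r. R r C1_differentiable_on UNIV"
    and R_lim: "\<And>x. (\<lambda>r. \<bar>R r x - max x 0\<bar> + \<bar>deriv (R r) x - indicator {0<..} x\<bar>) \<longlonglongrightarrow> 0"
    and R_bdd: "\<And>x. \<exists>C. \<forall>r. \<forall>y\<in>{-\<bar>x\<bar>..\<bar>x\<bar>}. \<bar>deriv (R r) y\<bar> \<le> C"
begin

lemma R_der: "(R r has_real_derivative deriv (R r) z) (at z)"
  using R_C1[of r] unfolding C1_differentiable_on_eq
  by (simp add: DERIV_deriv_iff_real_differentiable)

lemma R'_cont: "continuous_on UNIV (deriv (R r))"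
proof -
  have "vector_derivative (R r) (at x) = deriv (R r) x" for x
    using R_der[of r x] by (simp add: has_real_derivative_iff_has_vector_derivative vector_derivative_at)
  then show ?thesis using R_C1[of r] unfolding C1_differentiable_on_eq by simp
qed

lemma R_cont: "continuous_on UNIV (R r)"
  using R_der by (meson DERIV_isCont continuous_at_imp_continuous_on)

lemma R_meas[measurable]: "R r \<in> borel_measurable borel"
  using R_cont by (rule borel_measurable_continuous_onI)

lemma R'_meas[measurable]: "deriv (R r) \<in> borel_measurable borel"
  using R'_cont by (rule borel_measurable_continuous_onI)

lemma R_pt: "(\<lambda>r. R r x) \<longlonglongrightarrow> max x 0" and R'_pt: "(\<lambda>r. deriv (R r) x) \<longlonglongrightarrow> indicator {0<..} x"
proof -
  show "(\<lambda>r. R r x) \<longlonglongrightarrow> max x 0"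
    by (rule LIM_zero_cancel, rule Lim_null_comparison[OF _ R_lim[of x]]) auto
  show "(\<lambda>r. deriv (R r) x) \<longlonglongrightarrow> indicator {0<..} x"
    by (rule LIM_zero_cancel, rule Lim_null_comparison[OF _ R_lim[of x]]) auto
qed

lemma R_unif: "\<exists>C. \<forall>r z. \<bar>z\<bar> \<le> U \<longrightarrow> \<bar>R r z\<bar> \<le> C \<and> \<bar>deriv (R r) z\<bar> \<le> C"
proof -
  obtain C1 where C1: "\<And>r y. y \<in> {-\<bar>U\<bar>..\<bar>U\<bar>} \<Longrightarrow> \<bar>deriv (R r) y\<bar> \<le> C1" using R_bdd[of U] by blast
  have "Bseq (\<lambda>r. R r 0)" using R_pt[of 0] by (intro convergent_imp_Bseq convergentI)
  then obtain K where K: "\<And>r. \<bar>R r 0\<bar> \<le> K" unfolding Bseq_def by auto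
  have "\<bar>R r z\<bar> \<le> K + C1 * \<bar>U\<bar> \<and> \<bar>deriv (R r) z\<bar> \<le> C1" if z: "\<bar>z\<bar> \<le> U" for r z
  proof
    have "norm (R r z - R r 0) \<le> C1 * norm (z - 0)"
    proof (rule field_differentiable_bound[where S="{-\<bar>U\<bar>..\<bar>U\<bar>}" and f'="deriv (R r)"])
      show "(R r has_field_derivative deriv (R r) x) (at x within {-\<bar>U\<bar>..\<bar>U\<bar>})" for x
        using R_der by (rule has_field_derivative_at_within)
      show "norm (deriv (R r) x) \<le> C1" if "x \<in> {-\<bar>U\<bar>..\<bar>U\<bar>}" for x using C1[OF that] by simp
    qed (use z in auto)
    moreover have "C1 * \<bar>z\<bar> \<le> C1 * \<bar>U\<bar>"
    proof -
      have "0 \<le> C1" using C1[of 0 r] by force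
      then show ?thesis using z by (intro mult_left_mono) auto
    qed
    ultimately show "\<bar>R r z\<bar> \<le> K + C1 * \<bar>U\<bar>" using K[of r] by simp
    show "\<bar>deriv (R r) z\<bar> \<le> C1" using z by (intro C1) auto
  qed
  then show ?thesis by (intro exI[of _ "max (K + C1 * \<bar>U\<bar>) C1"]) (meson max.coboundedI1 max.coboundedI2)
qed

lemma PP_meas:
  assumes [measurable]: "\<rho> \<in> borel_measurable borel"
  shows "(\<lambda>y. PP d H \<rho> \<theta> y) \<in> borel_measurable \<mu>"
  unfolding PP_def uu_def by measurable

lemma DD_meas:
  assumes [measurable]: "\<rho> \<in> borel_measurable borel" "\<rho>' \<in> borel_measurable borel"
  shows "(\<lambda>y. DD d H \<rho> \<rho>' \<theta> k y) \<in> borel_measurable \<mu>"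
  unfolding DD_def uu_def ee_def by measurable

lemma upd_bound:
  fixes \<theta> :: "nat \<Rightarrow> real"
  assumes m: "m \<in> {1..pdim d H}" and s: "\<bar>s\<bar> \<le> 1"
  shows "\<bar>(\<theta>(k := \<theta> k + s)) m\<bar> \<le> 1 + (\<Sum>m=1..pdim d H. \<bar>\<theta> m\<bar>)"
proof -
  have "\<bar>\<theta> m\<bar> \<le> (\<Sum>m=1..pdim d H. \<bar>\<theta> m\<bar>)"
    using m by (intro member_le_sum[where f="\<lambda>m. \<bar>\<theta> m\<bar>"]) auto
  then show ?thesis using s by (auto simp: abs_le_iff)
qed

lemma LLr_grad:
  "is_gradient (pdim d H) (LLr d H f \<mu> (R r)) \<theta>
     (\<lambda>k. \<integral>y. 2 * (f y - PP d H (R r) \<theta> y) * (- DD d H (R r) (deriv (R r)) \<theta> k y) \<partial>\<mu>)"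
  unfolding is_gradient_def
proof
  fix k assume k: "k \<in> {1..pdim d H}"
  obtain Mf where Mf: "\<And>x. x \<in> space \<mu> \<Longrightarrow> \<bar>f x\<bar> \<le> Mf" using f_bnd by blast
  define T where "T = 1 + (\<Sum>m=1..pdim d H. \<bar>\<theta> m\<bar>)"
  define B where "B = \<bar>a\<bar> + \<bar>b\<bar>"
  obtain C where C: "\<And>r z. \<bar>z\<bar> \<le> T + d*(T*B) \<Longrightarrow> \<bar>R r z\<bar> \<le> C \<and> \<bar>deriv (R r) z\<bar> \<le> C"
    using R_unif[of "T + d*(T*B)"] by blast
  have T0: "0 \<le> T" unfolding T_def by (simp add: sum_nonneg)
  have B0: "0 \<le> B" unfolding B_def by simp
  define P1 where "P1 = T + H*(T*C)"
  define D1 where "D1 = 1 + H*(C + T*(C*(1 + d*(1*B))))"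
  define F where "F = (\<lambda>h y. (f y - PP d H (R r) (\<theta>(k := \<theta> k + h)) y)^2)"
  define F' where "F' = (\<lambda>h y. 2 * (f y - PP d H (R r) (\<theta>(k := \<theta> k + h)) y) * (- DD d H (R r) (deriv (R r)) (\<theta>(k := \<theta> k + h)) k y))"
  have bds: "\<bar>PP d H (R r) (\<theta>(k := \<theta> k + s)) y\<bar> \<le> P1 \<and> \<bar>DD d H (R r) (deriv (R r)) (\<theta>(k := \<theta> k + s)) k y\<bar> \<le> D1"
    if y: "y \<in> space \<mu>" and s: "\<bar>s\<bar> \<le> 1" for s y
  proof -
    have th: "\<And>m. m \<in> {1..pdim d H} \<Longrightarrow> \<bar>(\<theta>(k := \<theta> k + s)) m\<bar> \<le> T"
      unfolding T_def using s by (intro upd_bound)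
    have yb: "\<And>j. j \<in> {1..d} \<Longrightarrow> \<bar>y j\<bar> \<le> B" unfolding B_def using y by (rule coord_bnd)
    have rb: "\<And>z. \<bar>z\<bar> \<le> T + d*(T*B) \<Longrightarrow> \<bar>R r z\<bar> \<le> C" using C by blast
    have rb': "\<And>z. \<bar>z\<bar> \<le> T + d*(T*B) \<Longrightarrow> \<bar>deriv (R r) z\<bar> \<le> C" using C by blast
    note bb = bounds[where \<theta>="\<theta>(k := \<theta> k + s)" and y=y and T=T and B=B and \<rho>="R r" and \<rho>'="deriv (R r)"
       and Rb=C and Rb'=C and d=d and H=H]
    show ?thesis using bb(1)[OF th yb rb rb' T0 B0] bb(2)[OF th yb rb rb' T0 B0] by (simp add: P1_def D1_def)
  qed
  have LLr_eq: "LLr d H f \<mu> (R r) (\<theta>(k := \<theta> k + h)) = (\<integral>y. F h y \<partial>\<mu>)" for h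
    unfolding LLr_def F_def PP_def uu_def by (simp add: diff_diff_eq)
  have "((\<lambda>h. \<integral>y. F h y \<partial>\<mu>) has_real_derivative (\<integral>y. F' 0 y \<partial>\<mu>)) (at 0)"
  proof (rule DUI[where K="2 * ((Mf + P1) * D1)" and K0="(Mf + P1)^2"])
    show "finite_measure \<mu>" by (rule \<mu>_fin)
    show "F h \<in> borel_measurable \<mu>" for h
      unfolding F_def using PP_meas[OF R_meas] by measurable
    show "F' 0 \<in> borel_measurable \<mu>"
      unfolding F'_def using PP_meas[OF R_meas] DD_meas[OF R_meas R'_meas] by measurable
    show "((\<lambda>h. F h y) has_real_derivative F' s y) (at s)" if "y \<in> space \<mu>" "\<bar>s\<bar> \<le> 1" for y s
      unfolding F_def F'_def
      by (rule derivative_eq_intros PP_deriv[OF R_der] refl | simp)+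
    show "\<bar>F' s y\<bar> \<le> 2 * ((Mf + P1) * D1)" if y: "y \<in> space \<mu>" and s: "\<bar>s\<bar> \<le> 1" for y s
    proof -
      have "\<bar>f y - PP d H (R r) (\<theta>(k := \<theta> k + s)) y\<bar> \<le> Mf + P1" using Mf[OF y] bds[OF y s] by linarith
      moreover have "0 \<le> Mf + P1" using calculation by linarith
      ultimately have "\<bar>f y - PP d H (R r) (\<theta>(k := \<theta> k + s)) y\<bar> * \<bar>DD d H (R r) (deriv (R r)) (\<theta>(k := \<theta> k + s)) k y\<bar>
          \<le> (Mf + P1) * D1" using bds[OF y s] by (intro mult_mono) auto
      then show ?thesis unfolding F'_def abs_mult by (simp add: mult.assoc)
    qed
    show "\<bar>F 0 y\<bar> \<le> (Mf + P1)^2" if y: "y \<in> space \<mu>" for y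
    proof -
      have "\<bar>f y - PP d H (R r) (\<theta>(k := \<theta> k + 0)) y\<bar> \<le> Mf + P1" using Mf[OF y] bds[OF y, of 0] by linarith
      then show ?thesis unfolding F_def by (simp add: power2_le_iff_abs_le)
    qed
  qed
  then show "((\<lambda>h. LLr d H f \<mu> (R r) (\<theta>(k := \<theta> k + h))) has_real_derivative
      (\<integral>y. 2 * (f y - PP d H (R r) \<theta> y) * (- DD d H (R r) (deriv (R r)) \<theta> k y) \<partial>\<mu>)) (at 0)"
    unfolding LLr_eq F'_def by simp
qed

lemma relu_meas[measurable]: "(\<lambda>z::real. max z 0) \<in> borel_measurable borel" by measurable
lemma ind_meas[measurable]: "(indicator {0<..} :: real \<Rightarrow> real) \<in> borel_measurable borel"
  by (rule borel_measurable_indicator) simp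

definition gl :: "(nat \<Rightarrow> real) \<Rightarrow> nat \<Rightarrow> real" where
  "gl \<theta> k = (\<integral>y. 2 * (f y - NN d H \<theta> y) * (- DD d H (\<lambda>z. max z 0) (indicator {0<..}) \<theta> k y) \<partial>\<mu>)"

lemma grad_lim:
  "(\<lambda>r. \<integral>y. 2 * (f y - PP d H (R r) \<theta> y) * (- DD d H (R r) (deriv (R r)) \<theta> k y) \<partial>\<mu>) \<longlonglongrightarrow> gl \<theta> k"
proof -
  interpret finite_measure \<mu> by (rule \<mu>_fin)
  obtain Mf where Mf: "\<And>x. x \<in> space \<mu> \<Longrightarrow> \<bar>f x\<bar> \<le> Mf" using f_bnd by blast
  define T where "T = 1 + (\<Sum>m=1..pdim d H. \<bar>\<theta> m\<bar>)"
  define B where "B = \<bar>a\<bar> + \<bar>b\<bar>"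
  obtain C where C: "\<And>r z. \<bar>z\<bar> \<le> T + d*(T*B) \<Longrightarrow> \<bar>R r z\<bar> \<le> C \<and> \<bar>deriv (R r) z\<bar> \<le> C"
    using R_unif[of "T + d*(T*B)"] by blast
  have T0: "0 \<le> T" unfolding T_def by (simp add: sum_nonneg)
  have B0: "0 \<le> B" unfolding B_def by simp
  define P1 where "P1 = T + H*(T*C)"
  define D1 where "D1 = 1 + H*(C + T*(C*(1 + d*(1*B))))"
  have th: "\<And>m. m \<in> {1..pdim d H} \<Longrightarrow> \<bar>\<theta> m\<bar> \<le> T"
  proof -
    fix m assume m: "m \<in> {1..pdim d H}"
    have "\<bar>\<theta> m\<bar> \<le> (\<Sum>m=1..pdim d H. \<bar>\<theta> m\<bar>)"
      using m by (intro member_le_sum[where f="\<lambda>m. \<bar>\<theta> m\<bar>"]) auto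
    then show "\<bar>\<theta> m\<bar> \<le> T" unfolding T_def by simp
  qed
  have rb: "\<And>z. \<bar>z\<bar> \<le> T + d*(T*B) \<Longrightarrow> \<bar>R r z\<bar> \<le> C" for r using C by blast
  have rb': "\<And>z. \<bar>z\<bar> \<le> T + d*(T*B) \<Longrightarrow> \<bar>deriv (R r) z\<bar> \<le> C" for r using C by blast
  have bds: "\<bar>PP d H (R r) \<theta> y\<bar> \<le> P1 \<and> \<bar>DD d H (R r) (deriv (R r)) \<theta> k y\<bar> \<le> D1"
    if y: "y \<in> space \<mu>" for r y
  proof -
    have yb: "\<And>j. j \<in> {1..d} \<Longrightarrow> \<bar>y j\<bar> \<le> B" unfolding B_def using y by (rule coord_bnd)
    note bb = bounds[where \<theta>="\<theta>" and T=T and B=B and \<rho>="R r" and \<rho>'="deriv (R r)"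
       and Rb=C and Rb'=C and d=d and H=H]
    show ?thesis using bb(1)[OF th yb rb rb' T0 B0] bb(2)[OF th yb rb rb' T0 B0] by (simp add: P1_def D1_def)
  qed
  show ?thesis unfolding gl_def
  proof (rule integral_dominated_convergence[where w="\<lambda>_. 2 * ((Mf + P1) * D1)"])
    show "(\<lambda>y. 2 * (f y - NN d H \<theta> y) * (- DD d H (\<lambda>z. max z 0) (indicator {0<..}) \<theta> k y)) \<in> borel_measurable \<mu>"
      unfolding NN_PP using PP_meas[OF relu_meas] DD_meas[OF relu_meas ind_meas] by measurable
    show "(\<lambda>y. 2 * (f y - PP d H (R r) \<theta> y) * (- DD d H (R r) (deriv (R r)) \<theta> k y)) \<in> borel_measurable \<mu>" for r
      using PP_meas[OF R_meas] DD_meas[OF R_meas R'_meas] by measurable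
    show "integrable \<mu> (\<lambda>_. 2 * ((Mf + P1) * D1))" by simp
    show "AE y in \<mu>. (\<lambda>r. 2 * (f y - PP d H (R r) \<theta> y) * (- DD d H (R r) (deriv (R r)) \<theta> k y))
        \<longlonglongrightarrow> 2 * (f y - NN d H \<theta> y) * (- DD d H (\<lambda>z. max z 0) (indicator {0<..}) \<theta> k y)"
    proof (rule AE_I2)
      fix y
      have "(\<lambda>r. PP d H (R r) \<theta> y) \<longlonglongrightarrow> PP d H (\<lambda>z. max z 0) \<theta> y"
        unfolding PP_def by (intro tendsto_intros R_pt)
      moreover have "(\<lambda>r. DD d H (R r) (deriv (R r)) \<theta> k y) \<longlonglongrightarrow> DD d H (\<lambda>z. max z 0) (indicator {0<..}) \<theta> k y"
        unfolding DD_def by (intro tendsto_intros R_pt R'_pt)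
      ultimately show "(\<lambda>r. 2 * (f y - PP d H (R r) \<theta> y) * (- DD d H (R r) (deriv (R r)) \<theta> k y))
        \<longlonglongrightarrow> 2 * (f y - NN d H \<theta> y) * (- DD d H (\<lambda>z. max z 0) (indicator {0<..}) \<theta> k y)"
        unfolding NN_PP by (intro tendsto_intros)
    qed
    show "AE y in \<mu>. norm (2 * (f y - PP d H (R r) \<theta> y) * (- DD d H (R r) (deriv (R r)) \<theta> k y)) \<le> 2 * ((Mf + P1) * D1)" for r
    proof (rule AE_I2)
      fix y assume y: "y \<in> space \<mu>"
      have "\<bar>f y - PP d H (R r) \<theta> y\<bar> \<le> Mf + P1" using Mf[OF y] bds[OF y, of r] by linarith
      moreover have "0 \<le> Mf + P1" using calculation by linarith
      ultimately have "\<bar>f y - PP d H (R r) \<theta> y\<bar> * \<bar>DD d H (R r) (deriv (R r)) \<theta> k y\<bar> \<le> (Mf + P1) * D1"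
        using bds[OF y, of r] by (intro mult_mono) auto
      then show "norm (2 * (f y - PP d H (R r) \<theta> y) * (- DD d H (R r) (deriv (R r)) \<theta> k y)) \<le> 2 * ((Mf + P1) * D1)"
        unfolding abs_mult real_norm_def by (simp add: mult.assoc)
    qed
  qed
qed

lemma G_formula:
  fixes G :: "(nat \<Rightarrow> real) \<Rightarrow> (nat \<Rightarrow> real)"
  assumes G_def: "\<And>\<theta> g l. (\<forall>r. is_gradient (pdim d H) (LLr d H f \<mu> (R r)) \<theta> (g r)) \<Longrightarrow>
        (\<forall>k\<in>{1..pdim d H}. (\<lambda>r. g r k) \<longlonglongrightarrow> l k) \<Longrightarrow>
        (\<forall>k\<in>{1..pdim d H}. G \<theta> k = l k)"
  shows "k \<in> {1..pdim d H} \<Longrightarrow> G \<theta> k = gl \<theta> k"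
  using G_def[of \<theta> "\<lambda>r k. \<integral>y. 2 * (f y - PP d H (R r) \<theta> y) * (- DD d H (R r) (deriv (R r)) \<theta> k y) \<partial>\<mu>" "gl \<theta>"]
    LLr_grad grad_lim by blast

end

context setting2 begin

lemma relu_bounds:
  fixes \<theta> :: "nat \<Rightarrow> real"
  assumes th: "\<And>m. m \<in> {1..pdim d H} \<Longrightarrow> \<bar>\<theta> m\<bar> \<le> T" and T0: "0 \<le> T" and y: "y \<in> space \<mu>"
  shows "\<bar>NN d H \<theta> y\<bar> \<le> T + H*(T*(T + d*(T*(\<bar>a\<bar> + \<bar>b\<bar>))))"
    and "\<bar>DD d H (\<lambda>z. max z 0) (indicator {0<..}) \<theta> k y\<bar> \<le> 1 + H*((T + d*(T*(\<bar>a\<bar> + \<bar>b\<bar>))) + T*(1*(1 + d*(1*(\<bar>a\<bar> + \<bar>b\<bar>)))))"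
proof -
  define B where "B = \<bar>a\<bar> + \<bar>b\<bar>"
  have yb: "\<And>j. j \<in> {1..d} \<Longrightarrow> \<bar>y j\<bar> \<le> B" unfolding B_def using y by (rule coord_bnd)
  have rb: "\<And>z. \<bar>z\<bar> \<le> T + d*(T*B) \<Longrightarrow> \<bar>max z 0\<bar> \<le> T + d*(T*B)" by auto
  have rb': "\<And>z. \<bar>z\<bar> \<le> T + d*(T*B) \<Longrightarrow> \<bar>indicator {0<..} z :: real\<bar> \<le> 1" by (auto simp: indicator_def)
  have B0: "0 \<le> B" unfolding B_def by simp
  note bb = bounds[where \<theta>="\<theta>" and T=T and B=B and \<rho>="\<lambda>z. max z 0" and \<rho>'="indicator {0<..}"
       and Rb="T + d*(T*B)" and Rb'=1 and d=d and H=H]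
  show "\<bar>NN d H \<theta> y\<bar> \<le> T + H*(T*(T + d*(T*(\<bar>a\<bar> + \<bar>b\<bar>))))"
    using bb(1)[OF th yb rb rb' T0 B0] unfolding NN_PP B_def by simp
  show "\<bar>DD d H (\<lambda>z. max z 0) (indicator {0<..}) \<theta> k y\<bar> \<le> 1 + H*((T + d*(T*(\<bar>a\<bar> + \<bar>b\<bar>))) + T*(1*(1 + d*(1*(\<bar>a\<bar> + \<bar>b\<bar>)))))"
    using bb(2)[OF th yb rb rb' T0 B0] unfolding B_def by simp
qed

lemma relu_bounds_ex:
  fixes \<theta> :: "nat \<Rightarrow> real"
  shows "\<exists>K. \<forall>y\<in>space \<mu>. \<bar>f y\<bar> \<le> K \<and> \<bar>NN d H \<theta> y\<bar> \<le> K \<and> (\<forall>k. \<bar>DD d H (\<lambda>z. max z 0) (indicator {0<..}) \<theta> k y\<bar> \<le> K)"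
proof -
  obtain Mf where Mf: "\<And>x. x \<in> space \<mu> \<Longrightarrow> \<bar>f x\<bar> \<le> Mf" using f_bnd by blast
  define T where "T = 1 + (\<Sum>m=1..pdim d H. \<bar>\<theta> m\<bar>)"
  have T0: "0 \<le> T" unfolding T_def by (simp add: sum_nonneg)
  have th: "\<And>m. m \<in> {1..pdim d H} \<Longrightarrow> \<bar>\<theta> m\<bar> \<le> T"
  proof -
    fix m assume m: "m \<in> {1..pdim d H}"
    have "\<bar>\<theta> m\<bar> \<le> (\<Sum>m=1..pdim d H. \<bar>\<theta> m\<bar>)"
      using m by (intro member_le_sum[where f="\<lambda>m. \<bar>\<theta> m\<bar>"]) auto
    then show "\<bar>\<theta> m\<bar> \<le> T" unfolding T_def by simp
  qed
  note rb = relu_bounds[where \<theta>=\<theta> and T=T, OF th T0]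
  show ?thesis
    by (rule exI[of _ "max Mf (max (T + H*(T*(T + d*(T*(\<bar>a\<bar> + \<bar>b\<bar>))))) (1 + H*((T + d*(T*(\<bar>a\<bar> + \<bar>b\<bar>))) + T*(1*(1 + d*(1*(\<bar>a\<bar> + \<bar>b\<bar>)))))))"])
      (use Mf rb in \<open>auto simp: le_max_iff_disj\<close>)
qed

lemma NN_meas[measurable]: "(\<lambda>y. NN d H \<theta> y) \<in> borel_measurable \<mu>"
  unfolding NN_PP by (rule PP_meas[OF relu_meas])

lemma DDr_meas[measurable]: "(\<lambda>y. DD d H (\<lambda>z. max z 0) (indicator {0<..}) \<theta> k y) \<in> borel_measurable \<mu>"
  by (rule DD_meas[OF relu_meas ind_meas])

lemma bint:
  fixes K :: real
  assumes "h \<in> borel_measurable \<mu>" "\<And>y. y \<in> space \<mu> \<Longrightarrow> \<bar>h y\<bar> \<le> K"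
  shows "integrable \<mu> h"
proof -
  interpret finite_measure \<mu> by (rule \<mu>_fin)
  show ?thesis by (rule integrable_const_bound[where B=K]) (use assms in auto)
qed

definition LB :: "real \<Rightarrow> (nat \<Rightarrow> real) \<Rightarrow> real" where
  "LB \<xi> \<theta> = (\<integral>x. (f x - \<xi>) * (NN d H \<theta> x - f x) \<partial>\<mu>)"

lemma key_identity:
  "(\<Sum>k=1..pdim d H. \<theta> k * gl \<theta> k) + (ct d H \<theta> - 2*\<xi>) * gl \<theta> (pdim d H)
     = 4 * (LL d H f \<mu> \<theta> + LB \<xi> \<theta>)"
proof -
  obtain K :: real where K: "\<And>y. y \<in> space \<mu> \<Longrightarrow> \<bar>f y\<bar> \<le> K \<and> \<bar>NN d H \<theta> y\<bar> \<le> K \<and> (\<forall>k. \<bar>DD d H (\<lambda>z. max z 0) (indicator {0<..}) \<theta> k y\<bar> \<le> K)"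
    using relu_bounds_ex[of \<theta>] by blast
  let ?D = "\<lambda>k y. DD d H (\<lambda>z. max z 0) (indicator {0<..}) \<theta> k y"
  let ?N = "\<lambda>y. NN d H \<theta> y"
  have K0: "0 \<le> K" if "y \<in> space \<mu>" for y using K[OF that] by linarith
  have ig: "integrable \<mu> (\<lambda>y. 2 * (f y - ?N y) * (- ?D k y))" for k
  proof (rule bint)
    show "(\<lambda>y. 2 * (f y - ?N y) * (- ?D k y)) \<in> borel_measurable \<mu>" by measurable
    fix y assume y: "y \<in> space \<mu>"
    have "\<bar>f y - ?N y\<bar> * \<bar>?D k y\<bar> \<le> (K + K) * K"
      using K[OF y] K0[OF y] by (intro mult_mono) auto
    then show "\<bar>2 * (f y - ?N y) * (- ?D k y)\<bar> \<le> 2 * ((K + K) * K)"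
      by (simp only: abs_mult abs_minus_cancel abs_numeral mult.assoc)
  qed
  have i2: "integrable \<mu> (\<lambda>y. (f y - ?N y) * (f y - ?N y))"
  proof (rule bint)
    show "(\<lambda>y. (f y - ?N y) * (f y - ?N y)) \<in> borel_measurable \<mu>" by measurable
    fix y assume y: "y \<in> space \<mu>"
    have "\<bar>f y - ?N y\<bar> * \<bar>f y - ?N y\<bar> \<le> (K + K) * (K + K)"
      using K[OF y] K0[OF y] by (intro mult_mono) auto
    then show "\<bar>(f y - ?N y) * (f y - ?N y)\<bar> \<le> (K + K) * (K + K)" by (simp add: abs_mult)
  qed
  have i3: "integrable \<mu> (\<lambda>y. (f y - \<xi>) * (?N y - f y))"
  proof (rule bint)
    show "(\<lambda>y. (f y - \<xi>) * (?N y - f y)) \<in> borel_measurable \<mu>" by measurable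
    fix y assume y: "y \<in> space \<mu>"
    have "\<bar>f y - \<xi>\<bar> * \<bar>?N y - f y\<bar> \<le> (K + \<bar>\<xi>\<bar>) * (K + K)"
      using K[OF y] K0[OF y] by (intro mult_mono) auto
    then show "\<bar>(f y - \<xi>) * (?N y - f y)\<bar> \<le> (K + \<bar>\<xi>\<bar>) * (K + K)" by (simp add: abs_mult)
  qed
  have i1: "integrable \<mu> (\<lambda>y. f y - ?N y)"
  proof (rule bint)
    show "(\<lambda>y. f y - ?N y) \<in> borel_measurable \<mu>" by measurable
    fix y assume y: "y \<in> space \<mu>"
    show "\<bar>f y - ?N y\<bar> \<le> K + K" using K[OF y] by linarith
  qed
  have i4: "integrable \<mu> (\<lambda>y. (f y - ?N y) * ?N y)"
  proof (rule bint)
    show "(\<lambda>y. (f y - ?N y) * ?N y) \<in> borel_measurable \<mu>" by measurable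
    fix y assume y: "y \<in> space \<mu>"
    have "\<bar>f y - ?N y\<bar> * \<bar>?N y\<bar> \<le> (K + K) * K"
      using K[OF y] K0[OF y] by (intro mult_mono) auto
    then show "\<bar>(f y - ?N y) * ?N y\<bar> \<le> (K + K) * K" by (simp add: abs_mult)
  qed
  have "(\<Sum>k=1..pdim d H. \<theta> k * gl \<theta> k) = (\<Sum>k=1..pdim d H. \<integral>y. \<theta> k * (2 * (f y - ?N y) * (- ?D k y)) \<partial>\<mu>)"
    unfolding gl_def by simp
  also have "\<dots> = (\<integral>y. (\<Sum>k=1..pdim d H. \<theta> k * (2 * (f y - ?N y) * (- ?D k y))) \<partial>\<mu>)"
    by (rule Bochner_Integration.integral_sum[symmetric]) (use ig in auto)
  also have "\<dots> = (\<integral>y. -2 * (f y - ?N y) * (2 * ?N y - ct d H \<theta>) \<partial>\<mu>)"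
  proof (rule Bochner_Integration.integral_cong[OF refl])
    fix y
    have "(\<Sum>k=1..pdim d H. \<theta> k * (2 * (f y - ?N y) * (- ?D k y))) = -2 * (f y - ?N y) * (\<Sum>k=1..pdim d H. \<theta> k * ?D k y)"
      by (simp add: sum_distrib_left algebra_simps)
    then show "(\<Sum>k=1..pdim d H. \<theta> k * (2 * (f y - ?N y) * (- ?D k y))) = -2 * (f y - ?N y) * (2 * ?N y - ct d H \<theta>)"
      by (simp only: sum_DD_relu)
  qed
  finally have s1: "(\<Sum>k=1..pdim d H. \<theta> k * gl \<theta> k) = (\<integral>y. -2 * (f y - ?N y) * (2 * ?N y - ct d H \<theta>) \<partial>\<mu>)" .
  have s2: "gl \<theta> (pdim d H) = (\<integral>y. -2 * (f y - ?N y) \<partial>\<mu>)"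
    unfolding gl_def DD_c by simp
  have "(\<Sum>k=1..pdim d H. \<theta> k * gl \<theta> k) + (ct d H \<theta> - 2*\<xi>) * gl \<theta> (pdim d H)
      = (\<integral>y. -2 * (f y - ?N y) * (2 * ?N y - ct d H \<theta>) + (ct d H \<theta> - 2*\<xi>) * (-2 * (f y - ?N y)) \<partial>\<mu>)"
  proof -
    have iA: "integrable \<mu> (\<lambda>y. -2 * (f y - ?N y) * (2 * ?N y - ct d H \<theta>))"
    proof (rule bint)
      show "(\<lambda>y. -2 * (f y - ?N y) * (2 * ?N y - ct d H \<theta>)) \<in> borel_measurable \<mu>" by measurable
      fix y assume y: "y \<in> space \<mu>"
      have "\<bar>f y - ?N y\<bar> * \<bar>2 * ?N y - ct d H \<theta>\<bar> \<le> (K + K) * (2 * K + \<bar>ct d H \<theta>\<bar>)"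
        using K[OF y] K0[OF y] by (intro mult_mono) auto
      then show "\<bar>-2 * (f y - ?N y) * (2 * ?N y - ct d H \<theta>)\<bar> \<le> 2 * ((K + K) * (2 * K + \<bar>ct d H \<theta>\<bar>))"
        by (simp only: abs_mult abs_minus_cancel abs_numeral mult.assoc mult_minus_left)
    qed
    have e: "(\<lambda>y. (ct d H \<theta> - 2*\<xi>) * (-2 * (f y - ?N y))) = (\<lambda>y. (-2 * (ct d H \<theta> - 2*\<xi>)) * (f y - ?N y))"
      by (simp add: fun_eq_iff algebra_simps)
    have iB: "integrable \<mu> (\<lambda>y. (ct d H \<theta> - 2*\<xi>) * (-2 * (f y - ?N y)))"
      unfolding e using i1 by (rule integrable_mult_right)
    have "(\<Sum>k=1..pdim d H. \<theta> k * gl \<theta> k) + (ct d H \<theta> - 2*\<xi>) * gl \<theta> (pdim d H)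
      = (\<integral>y. -2 * (f y - ?N y) * (2 * ?N y - ct d H \<theta>) \<partial>\<mu>) + (\<integral>y. (ct d H \<theta> - 2*\<xi>) * (-2 * (f y - ?N y)) \<partial>\<mu>)"
      unfolding s1 s2 by simp
    also have "\<dots> = (\<integral>y. -2 * (f y - ?N y) * (2 * ?N y - ct d H \<theta>) + (ct d H \<theta> - 2*\<xi>) * (-2 * (f y - ?N y)) \<partial>\<mu>)"
      by (rule Bochner_Integration.integral_add[symmetric, OF iA iB])
    finally show ?thesis .
  qed
  also have "\<dots> = (\<integral>y. 4 * ((f y - ?N y) * (f y - ?N y) + (f y - \<xi>) * (?N y - f y)) \<partial>\<mu>)"
    by (rule Bochner_Integration.integral_cong[OF refl]) (simp add: algebra_simps)
  also have "\<dots> = 4 * (LL d H f \<mu> \<theta> + LB \<xi> \<theta>)"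
    unfolding LL_def LB_def power2_eq_square using i2 i3 by simp
  finally show ?thesis .
qed

end

lemma cont_int_param:
  fixes M :: "'a measure" and \<Phi> :: "real \<Rightarrow> 'a \<Rightarrow> real" and K :: real
  assumes fin: "finite_measure M" and meas: "\<And>s. \<Phi> s \<in> borel_measurable M"
    and cont: "\<And>y. y \<in> space M \<Longrightarrow> continuous_on S (\<lambda>s. \<Phi> s y)"
    and bnd: "\<And>s y. s \<in> S \<Longrightarrow> y \<in> space M \<Longrightarrow> \<bar>\<Phi> s y\<bar> \<le> K"
  shows "continuous_on S (\<lambda>s. \<integral>y. \<Phi> s y \<partial>M)"
proof (rule continuous_on_sequentiallyI)
  interpret finite_measure M by (rule fin)
  fix u :: "nat \<Rightarrow> real" and s assume u: "\<forall>n. u n \<in> S" and s: "s \<in> S" and lim: "u \<longlonglongrightarrow> s"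
  show "(\<lambda>n. \<integral>y. \<Phi> (u n) y \<partial>M) \<longlonglongrightarrow> (\<integral>y. \<Phi> s y \<partial>M)"
  proof (rule integral_dominated_convergence[where w="\<lambda>_. K"])
    show "AE y in M. (\<lambda>n. \<Phi> (u n) y) \<longlonglongrightarrow> \<Phi> s y"
    proof (rule AE_I2)
      fix y assume y: "y \<in> space M"
      show "(\<lambda>n. \<Phi> (u n) y) \<longlonglongrightarrow> \<Phi> s y"
        using cont[OF y] s u lim unfolding continuous_on_sequentially comp_def by blast
    qed
    show "AE y in M. norm (\<Phi> (u n) y) \<le> K" for n using bnd u by (auto intro!: AE_I2)
  qed (use meas in auto)
qed

lemma set_integral_sum':
  fixes f :: "nat \<Rightarrow> real \<Rightarrow> real"
  assumes "finite I" "\<And>i. i \<in> I \<Longrightarrow> set_integrable M A (f i)"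
  shows "set_integrable M A (\<lambda>x. \<Sum>i\<in>I. f i x)"
    and "(LINT x:A|M. (\<Sum>i\<in>I. f i x)) = (\<Sum>i\<in>I. LINT x:A|M. f i x)"
proof -
  have e: "(\<lambda>x. indicator A x *\<^sub>R (\<Sum>i\<in>I. f i x)) = (\<lambda>x. \<Sum>i\<in>I. indicator A x *\<^sub>R f i x)"
    by (simp add: sum_distrib_left)
  show "set_integrable M A (\<lambda>x. \<Sum>i\<in>I. f i x)"
    unfolding set_integrable_def e using assms(2) unfolding set_integrable_def by (intro Bochner_Integration.integrable_sum) auto
  show "(LINT x:A|M. (\<Sum>i\<in>I. f i x)) = (\<Sum>i\<in>I. LINT x:A|M. f i x)"
    unfolding set_lebesgue_integral_def e using assms(2) unfolding set_integrable_def
    by (intro Bochner_Integration.integral_sum) auto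
qed

context setting2 begin

lemma Theta_bnd:
  fixes \<Theta> :: "real \<Rightarrow> nat \<Rightarrow> real"
  assumes c: "\<forall>m\<in>{1..pdim d H}. continuous_on S (\<lambda>s. \<Theta> s m)" and S: "compact S"
  shows "\<exists>T. 0 \<le> T \<and> (\<forall>s\<in>S. \<forall>m\<in>{1..pdim d H}. \<bar>\<Theta> s m\<bar> \<le> T)"
proof -
  have "continuous_on S (\<lambda>s. \<Sum>m=1..pdim d H. \<bar>\<Theta> s m\<bar>)"
    using c by (intro continuous_intros) auto
  then have "bounded ((\<lambda>s. \<Sum>m=1..pdim d H. \<bar>\<Theta> s m\<bar>) ` S)"
    using S by (intro compact_imp_bounded compact_continuous_image)
  then obtain B where B: "\<And>s. s \<in> S \<Longrightarrow> norm (\<Sum>m=1..pdim d H. \<bar>\<Theta> s m\<bar>) \<le> B"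
    unfolding bounded_iff by auto
  have "\<bar>\<Theta> s m\<bar> \<le> max 0 B" if "s \<in> S" "m \<in> {1..pdim d H}" for s m
  proof -
    have "\<bar>\<Theta> s m\<bar> \<le> (\<Sum>m=1..pdim d H. \<bar>\<Theta> s m\<bar>)"
      using that by (intro member_le_sum[where f="\<lambda>m. \<bar>\<Theta> s m\<bar>"]) auto
    also have "\<dots> \<le> B" using B[OF that(1)] by simp
    finally show ?thesis by simp
  qed
  then show ?thesis by (intro exI[of _ "max 0 B"]) auto
qed

lemma NN_cont:
  fixes \<Theta> :: "real \<Rightarrow> nat \<Rightarrow> real"
  assumes c: "\<forall>m\<in>{1..pdim d H}. continuous_on S (\<lambda>s. \<Theta> s m)"
  shows "continuous_on S (\<lambda>s. NN d H (\<Theta> s) y)"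
proof -
  have ci: "continuous_on S (\<lambda>s. \<Theta> s m)" if "m \<in> {1..pdim d H}" for m using c that by blast
  have iw: "(i-1)*d+j \<in> {1..pdim d H}" if "i \<in> {1..H}" "j \<in> {1..d}" for i j
    using idx_w[OF that] by (auto simp: pdim_eq)
  show ?thesis
    unfolding NN_def wt_def bt_def vt_def ct_def
    by (intro continuous_intros ci iw) (auto simp: pdim_eq)
qed

lemma LL_LB_cont:
  fixes \<Theta> :: "real \<Rightarrow> nat \<Rightarrow> real"
  assumes c: "\<forall>m\<in>{1..pdim d H}. continuous_on S (\<lambda>s. \<Theta> s m)" and S: "compact S"
  shows "continuous_on S (\<lambda>s. LL d H f \<mu> (\<Theta> s))" and "continuous_on S (\<lambda>s. LB \<xi> (\<Theta> s))"
proof -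
  obtain T where T: "0 \<le> T" "\<And>s m. s \<in> S \<Longrightarrow> m \<in> {1..pdim d H} \<Longrightarrow> \<bar>\<Theta> s m\<bar> \<le> T"
    using Theta_bnd[OF c S] by blast
  obtain Mf where Mf: "\<And>x. x \<in> space \<mu> \<Longrightarrow> \<bar>f x\<bar> \<le> Mf" using f_bnd by blast
  define KN where "KN = T + H*(T*(T + d*(T*(\<bar>a\<bar> + \<bar>b\<bar>))))"
  have Nb: "\<bar>NN d H (\<Theta> s) y\<bar> \<le> KN" if "s \<in> S" "y \<in> space \<mu>" for s y
    unfolding KN_def by (rule relu_bounds(1)) (use T that in auto)
  have fN: "\<bar>f y - NN d H (\<Theta> s) y\<bar> \<le> Mf + KN" if "s \<in> S" "y \<in> space \<mu>" for s y
    using Nb[OF that] Mf[OF that(2)] by linarith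
  show "continuous_on S (\<lambda>s. LL d H f \<mu> (\<Theta> s))"
    unfolding LL_def
  proof (rule cont_int_param[where K="(Mf + KN) * (Mf + KN)"])
    show "finite_measure \<mu>" by (rule \<mu>_fin)
    show "(\<lambda>y. (f y - NN d H (\<Theta> s) y)\<^sup>2) \<in> borel_measurable \<mu>" for s by measurable
    show "continuous_on S (\<lambda>s. (f y - NN d H (\<Theta> s) y)\<^sup>2)" for y
      by (intro continuous_intros NN_cont c)
    show "\<bar>(f y - NN d H (\<Theta> s) y)\<^sup>2\<bar> \<le> (Mf + KN) * (Mf + KN)" if "s \<in> S" "y \<in> space \<mu>" for s y
      using fN[OF that] unfolding power2_eq_square abs_mult by (intro mult_mono) auto
  qed
  show "continuous_on S (\<lambda>s. LB \<xi> (\<Theta> s))"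
    unfolding LB_def
  proof (rule cont_int_param[where K="(Mf + \<bar>\<xi>\<bar>) * (Mf + KN)"])
    show "finite_measure \<mu>" by (rule \<mu>_fin)
    show "(\<lambda>y. (f y - \<xi>) * (NN d H (\<Theta> s) y - f y)) \<in> borel_measurable \<mu>" for s by measurable
    show "continuous_on S (\<lambda>s. (f y - \<xi>) * (NN d H (\<Theta> s) y - f y))" for y
      by (intro continuous_intros NN_cont c)
    show "\<bar>(f y - \<xi>) * (NN d H (\<Theta> s) y - f y)\<bar> \<le> (Mf + \<bar>\<xi>\<bar>) * (Mf + KN)" if "s \<in> S" "y \<in> space \<mu>" for s y
    proof -
      have "\<bar>NN d H (\<Theta> s) y - f y\<bar> \<le> Mf + KN" using fN[OF that] by linarith
      moreover have "\<bar>f y - \<xi>\<bar> \<le> Mf + \<bar>\<xi>\<bar>" using Mf[OF that(2)] by linarith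
      ultimately show ?thesis unfolding abs_mult by (intro mult_mono) auto
    qed
  qed
qed

lemma nonneg_comb: "0 \<le> (\<integral>x. (f x - \<xi>)\<^sup>2 \<partial>\<mu>) + LL d H f \<mu> \<theta> + 2 * LB \<xi> \<theta>"
proof -
  obtain K :: real where K: "\<And>y. y \<in> space \<mu> \<Longrightarrow> \<bar>f y\<bar> \<le> K \<and> \<bar>NN d H \<theta> y\<bar> \<le> K \<and> (\<forall>k. \<bar>DD d H (\<lambda>z. max z 0) (indicator {0<..}) \<theta> k y\<bar> \<le> K)"
    using relu_bounds_ex[of \<theta>] by blast
  let ?N = "\<lambda>y. NN d H \<theta> y"
  have K0: "0 \<le> K" if "y \<in> space \<mu>" for y using K[OF that] by linarith
  have i1: "integrable \<mu> (\<lambda>y. (f y - \<xi>)\<^sup>2)"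
  proof (rule bint)
    show "(\<lambda>y. (f y - \<xi>)\<^sup>2) \<in> borel_measurable \<mu>" by measurable
    fix y assume y: "y \<in> space \<mu>"
    have "\<bar>f y - \<xi>\<bar> * \<bar>f y - \<xi>\<bar> \<le> (K + \<bar>\<xi>\<bar>) * (K + \<bar>\<xi>\<bar>)"
      using K[OF y] K0[OF y] by (intro mult_mono) auto
    then show "\<bar>(f y - \<xi>)\<^sup>2\<bar> \<le> (K + \<bar>\<xi>\<bar>) * (K + \<bar>\<xi>\<bar>)" by (simp add: power2_eq_square abs_mult)
  qed
  have i2: "integrable \<mu> (\<lambda>y. (f y - ?N y)\<^sup>2)"
  proof (rule bint)
    show "(\<lambda>y. (f y - ?N y)\<^sup>2) \<in> borel_measurable \<mu>" by measurable
    fix y assume y: "y \<in> space \<mu>"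
    have "\<bar>f y - ?N y\<bar> * \<bar>f y - ?N y\<bar> \<le> (K + K) * (K + K)"
      using K[OF y] K0[OF y] by (intro mult_mono) auto
    then show "\<bar>(f y - ?N y)\<^sup>2\<bar> \<le> (K + K) * (K + K)" by (simp add: power2_eq_square abs_mult)
  qed
  have i3: "integrable \<mu> (\<lambda>y. 2 * ((f y - \<xi>) * (?N y - f y)))"
  proof (rule bint)
    show "(\<lambda>y. 2 * ((f y - \<xi>) * (?N y - f y))) \<in> borel_measurable \<mu>" by measurable
    fix y assume y: "y \<in> space \<mu>"
    have "\<bar>f y - \<xi>\<bar> * \<bar>?N y - f y\<bar> \<le> (K + \<bar>\<xi>\<bar>) * (K + K)"
      using K[OF y] K0[OF y] by (intro mult_mono) auto
    then show "\<bar>2 * ((f y - \<xi>) * (?N y - f y))\<bar> \<le> 2 * ((K + \<bar>\<xi>\<bar>) * (K + K))"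
      by (simp only: abs_mult abs_numeral)
  qed
  have "(\<integral>x. (f x - \<xi>)\<^sup>2 \<partial>\<mu>) + LL d H f \<mu> \<theta> + 2 * LB \<xi> \<theta>
      = (\<integral>x. (f x - \<xi>)\<^sup>2 + (f x - ?N x)\<^sup>2 + 2 * ((f x - \<xi>) * (?N x - f x)) \<partial>\<mu>)"
    unfolding LL_def LB_def using i1 i2 i3 by simp
  also have "\<dots> = (\<integral>x. (?N x - \<xi>)\<^sup>2 \<partial>\<mu>)"
    by (rule Bochner_Integration.integral_cong[OF refl]) (simp add: power2_eq_square algebra_simps)
  also have "\<dots> \<ge> 0" by simp
  finally show ?thesis .
qed

end

theorem proposition4p1:
  fixes d H :: nat and a b \<xi> :: real
    and f :: "(nat \<Rightarrow> real) \<Rightarrow> real"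
    and R :: "nat \<Rightarrow> real \<Rightarrow> real"
    and \<mu> :: "(nat \<Rightarrow> real) measure"
    and G :: "(nat \<Rightarrow> real) \<Rightarrow> (nat \<Rightarrow> real)"
    and V :: "(nat \<Rightarrow> real) \<Rightarrow> real"
    and \<Theta> :: "real \<Rightarrow> (nat \<Rightarrow> real)"
    and t :: real
  assumes d_pos: "d \<ge> 1" and H_pos: "H \<ge> 1" and ab: "a < b"
    and f_cont: "continuous_on (PiE {1..d} (\<lambda>_. {a..b})) f"
    and R_C1: "\<And>r. R r C1_differentiable_on UNIV"
    and R_lim: "\<And>x. (\<lambda>r. \<bar>R r x - max x 0\<bar> + \<bar>deriv (R r) x - indicator {0<..} x\<bar>) \<longlonglongrightarrow> 0"
    and R_bdd: "\<And>x. \<exists>C. \<forall>r. \<forall>y\<in>{-\<bar>x\<bar>..\<bar>x\<bar>}. \<bar>deriv (R r) y\<bar> \<le> C"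
    and \<mu>_sets: "sets \<mu> = sets (Pi\<^sub>M {1..d} (\<lambda>_. restrict_space lborel {a..b}))"
    and \<mu>_fin: "finite_measure \<mu>"
    and G_def: "\<And>\<theta> g l. (\<forall>r. is_gradient (pdim d H) (LLr d H f \<mu> (R r)) \<theta> (g r)) \<Longrightarrow>
        (\<forall>k\<in>{1..pdim d H}. (\<lambda>r. g r k) \<longlonglongrightarrow> l k) \<Longrightarrow>
        (\<forall>k\<in>{1..pdim d H}. G \<theta> k = l k)"
    and V_def: "\<And>\<theta>. V \<theta> = (pnorm d H \<theta>)\<^sup>2 + \<bar>ct d H \<theta> - 2 * \<xi>\<bar>\<^sup>2"
    and \<Theta>_cont: "\<forall>k\<in>{1..pdim d H}. continuous_on {0..} (\<lambda>s. \<Theta> s k)"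
    and \<Theta>_int: "\<And>s k. s \<ge> 0 \<Longrightarrow> k \<in> {1..pdim d H} \<Longrightarrow>
        set_integrable lborel {0..s} (\<lambda>u. G (\<Theta> u) k)"
    and \<Theta>_eq: "\<And>s k. s \<ge> 0 \<Longrightarrow> k \<in> {1..pdim d H} \<Longrightarrow>
        \<Theta> s k = \<Theta> 0 k - (LINT u:{0..s}|lborel. G (\<Theta> u) k)"
    and t_nonneg: "t \<ge> 0"
  shows "V (\<Theta> t) = V (\<Theta> 0) - 8 * (LINT s:{0..t}|lborel. LL d H f \<mu> (\<Theta> s))
            - 8 * (LINT s:{0..t}|lborel. (\<integral>x. (f x - \<xi>) * (NN d H (\<Theta> s) x - f x) \<partial>\<mu>))
       \<and> V (\<Theta> 0) - 8 * (LINT s:{0..t}|lborel. LL d H f \<mu> (\<Theta> s))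
            - 8 * (LINT s:{0..t}|lborel. (\<integral>x. (f x - \<xi>) * (NN d H (\<Theta> s) x - f x) \<partial>\<mu>))
         \<le> V (\<Theta> 0) + 4 * (LINT s:{0..t}|lborel. (\<integral>x. (f x - \<xi>)\<^sup>2 \<partial>\<mu>) - LL d H f \<mu> (\<Theta> s))"
proof -
  have s1: "setting d a b f \<mu>" using ab f_cont \<mu>_sets \<mu>_fin by (rule setting.intro)
  have s2: "setting2_axioms R"
    by (rule setting2_axioms.intro) (fact R_C1, fact R_lim, fact R_bdd)
  interpret S: setting2 d H a b f \<mu> R by (rule setting2.intro[OF s1 s2])
  define P where "P = pdim d H"
  have P1: "P \<in> {1..pdim d H}" unfolding P_def by (simp add: pdim_def)
  have Geq: "G \<theta> k = S.gl \<theta> k" if "k \<in> {1..pdim d H}" for \<theta> k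
    using S.G_formula[OF G_def that] .
  have cT: "\<forall>m\<in>{1..pdim d H}. continuous_on {0..t} (\<lambda>s. \<Theta> s m)"
    using \<Theta>_cont by (auto intro: continuous_on_subset)
  have LLi: "set_integrable lborel {0..t} (\<lambda>s. LL d H f \<mu> (\<Theta> s))"
    by (rule borel_integrable_atLeastAtMost'[OF S.LL_LB_cont(1)[OF cT compact_Icc]])
  have LBi: "set_integrable lborel {0..t} (\<lambda>s. S.LB \<xi> (\<Theta> s))"
    by (rule borel_integrable_atLeastAtMost'[OF S.LL_LB_cont(2)[OF cT compact_Icc]])
  have gi: "set_integrable lborel {0..t} (\<lambda>u. G (\<Theta> u) k)" if "k \<in> {1..pdim d H}" for k
    using \<Theta>_int[OF t_nonneg that] .
  have ch: "set_integrable lborel {0..t} (\<lambda>u. \<Theta> u k * G (\<Theta> u) k) \<and>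
      (\<Theta> t k)^2 = (\<Theta> 0 k)^2 - 2 * (LINT u:{0..t}|lborel. \<Theta> u k * G (\<Theta> u) k)"
    if k: "k \<in> {1..pdim d H}" for k
  proof -
    have xe: "\<Theta> s k = \<Theta> 0 k - (LINT u:{0..s}|lborel. G (\<Theta> u) k)" if "0 \<le> s" "s \<le> t" for s
      using \<Theta>_eq[OF that(1) k] .
    note sc = sq_chain[of t "\<lambda>u. G (\<Theta> u) k" "\<lambda>s. \<Theta> s k", OF t_nonneg gi[OF k] xe]
    show ?thesis using sc(1) sc(2) by (intro conjI)
  qed
  have chc: "set_integrable lborel {0..t} (\<lambda>u. (\<Theta> u P - 2*\<xi>) * G (\<Theta> u) P) \<and>
      (\<Theta> t P - 2*\<xi>)^2 = (\<Theta> 0 P - 2*\<xi>)^2 - 2 * (LINT u:{0..t}|lborel. (\<Theta> u P - 2*\<xi>) * G (\<Theta> u) P)"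
  proof -
    have xe: "\<Theta> s P - 2*\<xi> = (\<Theta> 0 P - 2*\<xi>) - (LINT u:{0..s}|lborel. G (\<Theta> u) P)" if "0 \<le> s" "s \<le> t" for s
      using \<Theta>_eq[OF that(1) P1] by simp
    note sc = sq_chain[of t "\<lambda>u. G (\<Theta> u) P" "\<lambda>s. \<Theta> s P - 2*\<xi>", OF t_nonneg gi[OF P1] xe]
    show ?thesis using sc(1) sc(2) by (intro conjI)
  qed
  have Vform: "V \<theta> = (\<Sum>k=1..pdim d H. (\<theta> k)^2) + (\<theta> P - 2*\<xi>)^2" for \<theta>
    unfolding V_def pnorm_def ct_def P_def by (simp add: sum_nonneg)
  define I where "I = (\<lambda>k. LINT u:{0..t}|lborel. \<Theta> u k * G (\<Theta> u) k)"
  define Ic where "Ic = (LINT u:{0..t}|lborel. (\<Theta> u P - 2*\<xi>) * G (\<Theta> u) P)"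
  have V1: "V (\<Theta> t) = V (\<Theta> 0) - 2 * ((\<Sum>k=1..pdim d H. I k) + Ic)"
  proof -
    have "(\<Sum>k=1..pdim d H. (\<Theta> t k)^2) = (\<Sum>k=1..pdim d H. (\<Theta> 0 k)^2 - 2 * I k)"
      unfolding I_def using ch by (intro sum.cong) auto
    also have "\<dots> = (\<Sum>k=1..pdim d H. (\<Theta> 0 k)^2) - 2 * (\<Sum>k=1..pdim d H. I k)"
      by (simp add: sum_subtractf sum_distrib_left)
    finally have s: "(\<Sum>k=1..pdim d H. (\<Theta> t k)^2) = (\<Sum>k=1..pdim d H. (\<Theta> 0 k)^2) - 2 * (\<Sum>k=1..pdim d H. I k)" .
    have c: "(\<Theta> t P - 2*\<xi>)^2 = (\<Theta> 0 P - 2*\<xi>)^2 - 2 * Ic" using chc unfolding Ic_def by blast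
    show ?thesis unfolding Vform s c by simp
  qed
  have sumI: "(\<Sum>k=1..pdim d H. I k) + Ic = 4 * ((LINT s:{0..t}|lborel. LL d H f \<mu> (\<Theta> s)) + (LINT s:{0..t}|lborel. S.LB \<xi> (\<Theta> s)))"
  proof -
    have "(\<Sum>k=1..pdim d H. I k) = (LINT u:{0..t}|lborel. (\<Sum>k=1..pdim d H. \<Theta> u k * G (\<Theta> u) k))"
      unfolding I_def using ch by (intro set_integral_sum'(2)[symmetric]) auto
    moreover have "set_integrable lborel {0..t} (\<lambda>u. \<Sum>k=1..pdim d H. \<Theta> u k * G (\<Theta> u) k)"
      using ch by (intro set_integral_sum'(1)) auto
    ultimately have "(\<Sum>k=1..pdim d H. I k) + Ic = (LINT u:{0..t}|lborel.
        (\<Sum>k=1..pdim d H. \<Theta> u k * G (\<Theta> u) k) + (\<Theta> u P - 2*\<xi>) * G (\<Theta> u) P)"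
      unfolding Ic_def using chc by (simp add: set_integral_add(2))
    also have "\<dots> = (LINT u:{0..t}|lborel. 4 * (LL d H f \<mu> (\<Theta> u) + S.LB \<xi> (\<Theta> u)))"
    proof (rule set_lebesgue_integral_cong)
      show "{0..t} \<in> sets lborel" by simp
      show "\<forall>u. u \<in> {0..t} \<longrightarrow> (\<Sum>k=1..pdim d H. \<Theta> u k * G (\<Theta> u) k) + (\<Theta> u P - 2*\<xi>) * G (\<Theta> u) P
          = 4 * (LL d H f \<mu> (\<Theta> u) + S.LB \<xi> (\<Theta> u))"
      proof (intro allI impI)
        fix u
        have "(\<Sum>k=1..pdim d H. \<Theta> u k * G (\<Theta> u) k) = (\<Sum>k=1..pdim d H. \<Theta> u k * S.gl (\<Theta> u) k)"
          using Geq by (intro sum.cong) auto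
        moreover have "(\<Theta> u P - 2*\<xi>) * G (\<Theta> u) P = (ct d H (\<Theta> u) - 2*\<xi>) * S.gl (\<Theta> u) (pdim d H)"
          using Geq[OF P1] unfolding ct_def P_def by simp
        ultimately show "(\<Sum>k=1..pdim d H. \<Theta> u k * G (\<Theta> u) k) + (\<Theta> u P - 2*\<xi>) * G (\<Theta> u) P
          = 4 * (LL d H f \<mu> (\<Theta> u) + S.LB \<xi> (\<Theta> u))"
          using S.key_identity[of "\<Theta> u" \<xi>] by simp
      qed
    qed
    also have "\<dots> = 4 * ((LINT s:{0..t}|lborel. LL d H f \<mu> (\<Theta> s)) + (LINT s:{0..t}|lborel. S.LB \<xi> (\<Theta> s)))"
      using LLi LBi by (simp add: set_integral_add(2))
    finally show ?thesis .
  qed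
  define Q where "Q = (\<integral>x. (f x - \<xi>)\<^sup>2 \<partial>\<mu>)"
  have Qi: "set_integrable lborel {0..t} (\<lambda>s. Q)"
    by (rule borel_integrable_atLeastAtMost') (rule continuous_on_const)
  have eq1: "V (\<Theta> t) = V (\<Theta> 0) - 8 * (LINT s:{0..t}|lborel. LL d H f \<mu> (\<Theta> s))
            - 8 * (LINT s:{0..t}|lborel. S.LB \<xi> (\<Theta> s))"
    using V1 sumI by simp
  have "0 \<le> (LINT s:{0..t}|lborel. Q + LL d H f \<mu> (\<Theta> s) + 2 * S.LB \<xi> (\<Theta> s))"
    unfolding set_lebesgue_integral_def
    by (rule Bochner_Integration.integral_nonneg) (use S.nonneg_comb in \<open>auto simp: Q_def indicator_def\<close>)
  also have "(LINT s:{0..t}|lborel. Q + LL d H f \<mu> (\<Theta> s) + 2 * S.LB \<xi> (\<Theta> s))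
     = (LINT s:{0..t}|lborel. Q) + (LINT s:{0..t}|lborel. LL d H f \<mu> (\<Theta> s)) + 2 * (LINT s:{0..t}|lborel. S.LB \<xi> (\<Theta> s))"
    using Qi LLi LBi by (simp add: set_integral_add(1,2))
  finally have nn: "0 \<le> (LINT s:{0..t}|lborel. Q) + (LINT s:{0..t}|lborel. LL d H f \<mu> (\<Theta> s)) + 2 * (LINT s:{0..t}|lborel. S.LB \<xi> (\<Theta> s))" .
  have eq2: "(LINT s:{0..t}|lborel. Q - LL d H f \<mu> (\<Theta> s)) = (LINT s:{0..t}|lborel. Q) - (LINT s:{0..t}|lborel. LL d H f \<mu> (\<Theta> s))"
    using Qi LLi by (rule set_integral_diff(2))
  show ?thesis
    using eq1 nn eq2 unfolding S.LB_def Q_def by linarith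
qed

end
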